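(* There exist positive integers $m_0,t,L,q_0$, depending only on $k$, with the following property. Let $\nu=(\nu_N)$ be an $(m_0,t,L,q_0)$-pseudo-random weight. Then there is a function $N\mapsto\varepsilon(N)\ge0$ on primes with $\varepsilon(N)\to0$ as $N\to\infty$ (depending only on $k$ and $\nu$) such that for every prime $N$ and all functions $f_0,\dots,f_k:\mathbb{Z}_N\to\mathbb{R}$ with $|f_j(x)|\le1+\nu_N(x)$ for all $x\in\mathbb{Z}_N$ and all $0\le j\le k$, $$\Bigl|\mathbb{E}\Bigl(\prod_{j=0}^kf_j(x+jt)\,\Big|\,x,t\in\mathbb{Z}_N\Bigr)\Bigr|\le2^{k+1}\min_{0\le j\le k}\|f_j\|_{U^k}+\varepsilon(N).$$
   Context: Let $k\ge 2$ be a fixed integer. For a prime $N$, $\mathbb{Z}_N=\mathbb{Z}/N\mathbb{Z}$. For a finite set $A$ and $g:A\to\mathbb{R}$, $\mathbb{E}(g\mid A)=\frac{1}{|A|}\sum_{a\in A}g(a)$. For $\boldsymbol\omega\in\{0,1\}^d$ and $\mathbf t\in\mathbb{Z}_N^d$, $\boldsymbol\omega\cdot\mathbf t=\sum_i\omega_it_i$; the Gowers norm is $\|f\|_{U^d}=\Bigl(\mathbb{E}\bigl(\prod_{\boldsymbol\omega\in\{0,1\}^d}f(x+\boldsymbol\omega\cdot\mathbf t)\mid x\in\mathbb{Z}_N,\mathbf t\in\mathbb{Z}_N^d\bigr)\Bigr)^{1/2^d}$. Let $m_0,t,L,q_0$ be positive integers. An $(m_0,t,L,q_0)$-pseudo-random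 weight is a family $\nu=(\nu_N)_{N\text{ prime}}$ of functions $\nu_N:\mathbb{Z}_N\to[0,\infty)$ satisfying: (Linear forms condition) $\sup\bigl|\mathbb{E}\bigl(\prod_{i=1}^m\nu_N(\psi_i(\mathbf{x}))\mid \mathbf{x}\in\mathbb{Z}_N^t\bigr)-1\bigr|\to 0$ as $N\to\infty$, where the supremum is over all $m\le m_0$ and all maps $\psi_1,\dots,\psi_m:\mathbb{Z}_N^t\to\mathbb{Z}_N$ of the form $\psi_i(\mathbf{x})=b_i+\sum_{j=1}^tL_{i,j}x_j$ with $b_i\in\mathbb{Z}$ arbitrary, $L_{i,j}\in\mathbb{Z}$, $|L_{i,j}|\le L$, each vector $(L_{i,j})_{1\le j\le t}\in\mathbb{Z}^t$ nonzero, and no two of these vectors collinear; (Correlation condition) there exist functions $\tau_N:\mathbb{Z}_N\to[0,\infty)$ with $\sup_N\mathbb{E}(\tau_N^p\mid\mathbb{Z}_N)<\infty$ for every integer $p\ge1$, such that for every prime $N$, every integer $q$ with $2\le q\le q_0$ and all $h_1,\dots,h_q\in\mathbb{Z}_N$ (not necessarily distinct), $\mathbb{E}\bigl(\nu_N(x+h_1)\cdots\nu_N(x+h_q)\mid x\in\mathbb{Z}_N\bigr)\le\sum_{1\le i<j\le q}\tau_N(h_i-h_j)$. *)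

theory Defs
  imports Complex_Main "HOL-Library.FuncSet" "HOL-Computational_Algebra.Primes"
begin

text \<open>Z_N is represented by the integers {0..<N}; a function
Z_N -> R is a function int => real of which only the values on {0..<N} matter,
and all arguments are reduced mod N. A family (nu_N) indexed by primes N is
a function nat => int => real. Vectors in Z_N^t are functions nat => int on
{0..<t} with values in {0..<N} (PiE). A vector omega in {0,1}^d is encoded
by the set S = {i. omega_i = 1} of {0..<d}.\<close>

definition ZN :: "nat \<Rightarrow> int set" where
  "ZN N = {0..<int N}"

definition ZN_vecs :: "nat \<Rightarrow> nat \<Rightarrow> (nat \<Rightarrow> int) set" where
  "ZN_vecs N t = PiE {0..<t} (\<lambda>_. ZN N)"

definition gowers_norm :: "nat \<Rightarrow> nat \<Rightarrow> (int \<Rightarrow> real) \<Rightarrow> real" where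
  "gowers_norm N d f =
     root (2 ^ d)
      ((\<Sum>x\<in>ZN N. \<Sum>t\<in>ZN_vecs N d.
          \<Prod>S\<in>Pow {0..<d}. f ((x + (\<Sum>i\<in>S. t i)) mod int N))
       / real (card (ZN N \<times> ZN_vecs N d)))"

text \<open>Two vectors of Z^t are collinear (only used for nonzero vectors).\<close>
definition collinear_int :: "nat \<Rightarrow> (nat \<Rightarrow> int) \<Rightarrow> (nat \<Rightarrow> int) \<Rightarrow> bool" where
  "collinear_int t u v \<longleftrightarrow>
     (\<exists>c::real. \<forall>j<t. real_of_int (u j) = c * real_of_int (v j)) \<or>
     (\<exists>c::real. \<forall>j<t. real_of_int (v j) = c * real_of_int (u j))"

definition linear_forms_condition ::
  "nat \<Rightarrow> nat \<Rightarrow> nat \<Rightarrow> (nat \<Rightarrow> int \<Rightarrow> real) \<Rightarrow> bool" where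
  "linear_forms_condition m0 t L nu \<longleftrightarrow>
     (\<forall>e>0. \<exists>N0. \<forall>N. prime N \<and> N \<ge> N0 \<longrightarrow>
        (\<forall>m b Lm. m \<le> m0 \<and>
            (\<forall>i<m. \<forall>j<t. \<bar>Lm i j\<bar> \<le> int L) \<and>
            (\<forall>i<m. \<exists>j<t. Lm i j \<noteq> 0) \<and>
            (\<forall>i<m. \<forall>i'<m. i \<noteq> i' \<longrightarrow> \<not> collinear_int t (Lm i) (Lm i'))
          \<longrightarrow>
            \<bar>(\<Sum>x\<in>ZN_vecs N t.
                 \<Prod>i<m. nu N ((b i + (\<Sum>j<t. Lm i j * x j)) mod int N))
               / real (card (ZN_vecs N t)) - 1\<bar> \<le> e))"

definition correlation_condition ::
  "nat \<Rightarrow> (nat \<Rightarrow> int \<Rightarrow> real) \<Rightarrow> bool" where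
  "correlation_condition q0 nu \<longleftrightarrow>
     (\<exists>tau :: nat \<Rightarrow> int \<Rightarrow> real.
        (\<forall>N x. prime N \<longrightarrow> x \<in> ZN N \<longrightarrow> tau N x \<ge> 0) \<and>
        (\<forall>p::nat. p \<ge> 1 \<longrightarrow> (\<exists>B. \<forall>N. prime N \<longrightarrow>
            (\<Sum>x\<in>ZN N. tau N x ^ p) / real (card (ZN N)) \<le> B)) \<and>
        (\<forall>N q h. prime N \<and> 2 \<le> q \<and> q \<le> q0 \<longrightarrow>
            (\<Sum>x\<in>ZN N. \<Prod>i<q. nu N ((x + h i) mod int N)) / real (card (ZN N))
              \<le> (\<Sum>j<q. \<Sum>i<j. tau N ((h i - h j) mod int N))))"

definition pseudo_random_weight ::
  "nat \<Rightarrow> nat \<Rightarrow> nat \<Rightarrow> nat \<Rightarrow> (nat \<Rightarrow> int \<Rightarrow> real) \<Rightarrow> bool" where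
  "pseudo_random_weight m0 t L q0 nu \<longleftrightarrow>
     (\<forall>N x. prime N \<longrightarrow> x \<in> ZN N \<longrightarrow> nu N x \<ge> 0) \<and>
     linear_forms_condition m0 t L nu \<and>
     correlation_condition q0 nu"

end

theory Submission
  imports Defs
begin


lemma weighted_CS:
  fixes w A :: "'a \<Rightarrow> real"
  assumes fin: "finite X" and w: "\<And>x. x \<in> X \<Longrightarrow> w x \<ge> 0"
  shows "(\<Sum>x\<in>X. w x * A x)^2 \<le> (\<Sum>x\<in>X. w x) * (\<Sum>x\<in>X. w x * (A x)^2)"
proof -
  define S where "S = (\<Sum>x\<in>X. w x)"
  define T where "T = (\<Sum>x\<in>X. w x * A x)"
  define Q where "Q = (\<Sum>x\<in>X. w x * (A x)^2)"
  have S0: "S \<ge> 0" unfolding S_def using w by (simp add: sum_nonneg)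
  show ?thesis
  proof (cases "S = 0")
    case True
    then have "\<forall>x\<in>X. w x = 0" using sum_nonneg_eq_0_iff[OF fin] w unfolding S_def by blast
    then show ?thesis by simp
  next
    case False
    then have Sp: "S > 0" using S0 by simp
    have "0 \<le> (\<Sum>x\<in>X. w x * (A x * S - T)^2)"
      using w by (intro sum_nonneg) simp
    also have "\<dots> = (\<Sum>x\<in>X. S^2 * (w x * (A x)^2) - (2 * S * T) * (w x * A x) + T^2 * w x)"
      by (intro sum.cong refl) (simp add: power2_eq_square algebra_simps)
    also have "\<dots> = S^2 * Q - 2 * S * T * T + T^2 * S"
      unfolding Q_def T_def S_def
      by (simp add: sum_subtractf sum.distrib sum_distrib_left)
    also have "\<dots> = S * (S * Q - T^2)" by (simp add: power2_eq_square algebra_simps)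
    finally have "0 \<le> S * Q - T^2" using Sp by (simp add: zero_le_mult_iff)
    then show ?thesis unfolding S_def T_def Q_def by simp
  qed
qed

lemma weighted_CS2:
  fixes b p A :: "'a \<Rightarrow> real"
  assumes fin: "finite X" and bp: "\<And>x. x \<in> X \<Longrightarrow> \<bar>b x\<bar> \<le> p x"
  shows "(\<Sum>x\<in>X. b x * A x)^2 \<le> (\<Sum>x\<in>X. p x) * (\<Sum>x\<in>X. p x * (A x)^2)"
proof -
  have "(\<Sum>x\<in>X. b x * A x)^2 = \<bar>\<Sum>x\<in>X. b x * A x\<bar>^2" by simp
  also have "\<dots> \<le> (\<Sum>x\<in>X. \<bar>b x\<bar> * \<bar>A x\<bar>)^2"
    by (intro power_mono) (auto simp: abs_mult[symmetric] intro: sum_abs)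
  also have "\<dots> \<le> (\<Sum>x\<in>X. \<bar>b x\<bar>) * (\<Sum>x\<in>X. \<bar>b x\<bar> * (\<bar>A x\<bar>)^2)"
    by (rule weighted_CS[OF fin]) simp
  also have "\<dots> \<le> (\<Sum>x\<in>X. p x) * (\<Sum>x\<in>X. p x * (A x)^2)"
  proof (rule mult_mono)
    show "(\<Sum>x\<in>X. \<bar>b x\<bar>) \<le> (\<Sum>x\<in>X. p x)" using bp by (intro sum_mono) auto
    show "(\<Sum>x\<in>X. \<bar>b x\<bar> * \<bar>A x\<bar>^2) \<le> (\<Sum>x\<in>X. p x * (A x)^2)"
      using bp by (intro sum_mono) (simp add: mult_right_mono)
    show "0 \<le> (\<Sum>x\<in>X. p x)" using bp by (intro sum_nonneg) (auto intro: order_trans[OF abs_ge_zero])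
    show "0 \<le> (\<Sum>x\<in>X. \<bar>b x\<bar> * \<bar>A x\<bar>^2)" by (intro sum_nonneg) auto
  qed
  finally show ?thesis .
qed

definition updS :: "nat set \<Rightarrow> (nat \<Rightarrow> int) \<Rightarrow> (nat \<Rightarrow> int) \<Rightarrow> nat \<Rightarrow> int" where
  "updS R x y = (\<lambda>l. if l \<in> R then y l else x l)"

lemma ZN_vecs_finite: "finite (ZN_vecs N t)"
  unfolding ZN_vecs_def ZN_def by (intro finite_PiE) auto

lemma card_ZN: "card (ZN N) = N" unfolding ZN_def by simp

lemma card_ZN_vecs: "card (ZN_vecs N t) = N ^ t"
  unfolding ZN_vecs_def by (simp add: card_PiE card_ZN)

lemma updS_in: "x \<in> ZN_vecs N t \<Longrightarrow> y \<in> ZN_vecs N t \<Longrightarrow> updS S x y \<in> ZN_vecs N t"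
  unfolding ZN_vecs_def updS_def PiE_def Pi_def extensional_def by auto

lemma swap_sum:
  fixes \<Phi> :: "(nat \<Rightarrow> int) \<Rightarrow> real"
  shows "(\<Sum>x\<in>ZN_vecs N t. \<Sum>y\<in>ZN_vecs N t. \<Phi> (updS S x y))
       = real (N ^ t) * (\<Sum>x\<in>ZN_vecs N t. \<Phi> x)"
proof -
  let ?V = "ZN_vecs N t"
  define sw where "sw = (\<lambda>(x::nat\<Rightarrow>int, y::nat\<Rightarrow>int). (updS S x y, updS S y x))"
  have sw_inv: "sw (sw p) = p" for p
    by (cases p) (auto simp: sw_def updS_def fun_eq_iff)
  have sw_in: "sw p \<in> ?V \<times> ?V" if "p \<in> ?V \<times> ?V" for p
    using that by (cases p) (auto simp: sw_def updS_in)
  have bij: "bij_betw sw (?V \<times> ?V) (?V \<times> ?V)"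
    by (rule bij_betw_byWitness[where f'=sw]) (use sw_inv sw_in in \<open>blast+\<close>)
  have "(\<Sum>x\<in>?V. \<Sum>y\<in>?V. \<Phi> (updS S x y)) = (\<Sum>p\<in>?V \<times> ?V. \<Phi> (fst (sw p)))"
    by (simp add: sum.cartesian_product sw_def case_prod_beta)
  also have "\<dots> = (\<Sum>p\<in>?V \<times> ?V. \<Phi> (fst p))"
    using sum.reindex_bij_betw[OF bij, of "\<lambda>p. \<Phi> (fst p)"] by simp
  also have "\<dots> = (\<Sum>x\<in>?V. \<Sum>y\<in>?V. \<Phi> x)"
    by (simp only: sum.cartesian_product split_def)
  also have "\<dots> = real (N ^ t) * (\<Sum>x\<in>?V. \<Phi> x)"
    by (simp add: card_ZN_vecs sum_distrib_left)
  finally show ?thesis .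
qed

lemma bij_sum:
  fixes H :: "(nat \<Rightarrow> int) \<Rightarrow> real"
  assumes "\<And>x. x \<in> ZN_vecs N t \<Longrightarrow> \<tau> x \<in> ZN_vecs N t"
    and "inj_on \<tau> (ZN_vecs N t)"
  shows "(\<Sum>x\<in>ZN_vecs N t. H (\<tau> x)) = (\<Sum>x\<in>ZN_vecs N t. H x)"
proof -
  have "\<tau> ` ZN_vecs N t = ZN_vecs N t"
    using assms by (intro endo_inj_surj ZN_vecs_finite) auto
  then show ?thesis using sum.reindex[OF assms(2), of H] by simp
qed


lemma perm_sum:
  fixes G :: "(nat \<Rightarrow> int) \<Rightarrow> real"
  assumes R: "R \<subseteq> {..<t}" and \<pi>t: "\<forall>l<t. \<pi> l < t" and \<pi>inv: "\<forall>l<t. \<pi> (\<pi> l) = l"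
  shows "(\<Sum>y\<in>ZN_vecs N t. G (updS R x (\<lambda>l. y (\<pi> l)))) = (\<Sum>y\<in>ZN_vecs N t. G (updS R x y))"
proof -
  define \<tau> where "\<tau> = (\<lambda>(y::nat\<Rightarrow>int) l. if l < t then y (\<pi> l) else undefined)"
  have 1: "updS R x (\<tau> y) = updS R x (\<lambda>l. y (\<pi> l))" for y
    using R by (auto simp: updS_def \<tau>_def fun_eq_iff)
  have 2: "\<tau> y \<in> ZN_vecs N t" if "y \<in> ZN_vecs N t" for y
    using that \<pi>t unfolding \<tau>_def ZN_vecs_def PiE_def Pi_def extensional_def by auto
  have 3: "inj_on \<tau> (ZN_vecs N t)"
  proof (rule inj_onI)
    fix y1 y2 assume y: "y1 \<in> ZN_vecs N t" "y2 \<in> ZN_vecs N t" and e: "\<tau> y1 = \<tau> y2"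
    show "y1 = y2"
    proof
      fix m show "y1 m = y2 m"
      proof (cases "m < t")
        case True
        then have "\<pi> m < t" using \<pi>t by auto
        then have "y1 (\<pi> (\<pi> m)) = y2 (\<pi> (\<pi> m))" using fun_cong[OF e, of "\<pi> m"] by (simp add: \<tau>_def)
        then show ?thesis using \<pi>inv True by simp
      next
        case False
        then show ?thesis using y unfolding ZN_vecs_def PiE_def extensional_def by auto
      qed
    qed
  qed
  have "(\<Sum>y\<in>ZN_vecs N t. G (updS R x (\<lambda>l. y (\<pi> l)))) = (\<Sum>y\<in>ZN_vecs N t. G (updS R x (\<tau> y)))"
    by (simp add: 1)
  also have "\<dots> = (\<Sum>y\<in>ZN_vecs N t. G (updS R x y))"
    by (rule bij_sum[OF 2 3])
  finally show ?thesis .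
qed

lemma CS_coord:
  fixes a b p :: "(nat \<Rightarrow> int) \<Rightarrow> real" and \<pi> :: "nat \<Rightarrow> nat"
  assumes N: "N > 0"
    and R: "R \<subseteq> {..<t}" and \<pi>t: "\<forall>l<t. \<pi> l < t" and \<pi>inv: "\<forall>l<t. \<pi> (\<pi> l) = l"
    and disj: "\<forall>l\<in>R. \<pi> l \<notin> R"
    and bR: "\<And>x y. b (updS R x y) = b x" and b\<pi>R: "\<And>x y. b (updS (\<pi>`R) x y) = b x"
    and pR: "\<And>x y. p (updS R x y) = p x" and p\<pi>R: "\<And>x y. p (updS (\<pi>`R) x y) = p x"
    and a\<pi>R: "\<And>x y. a (updS (\<pi>`R) x y) = a x"
    and bp: "\<And>x. \<bar>b x\<bar> \<le> p x"
  shows "(\<Sum>x\<in>ZN_vecs N t. a x * b x)^2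
          \<le> (\<Sum>x\<in>ZN_vecs N t. p x) * (\<Sum>x\<in>ZN_vecs N t. p x * a x * a (updS R x (\<lambda>l. x (\<pi> l))))"
    and "0 \<le> (\<Sum>x\<in>ZN_vecs N t. p x * a x * a (updS R x (\<lambda>l. x (\<pi> l))))"
proof -
  let ?V = "ZN_vecs N t"
  define M where "M = real (N ^ t)"
  have Mp: "M > 0" unfolding M_def using N by simp
  define A where "A x = (\<Sum>y\<in>?V. a (updS R x y))" for x
  have s1: "(\<Sum>x\<in>?V. a x * b x) = (1/M) * (\<Sum>x\<in>?V. b x * A x)"
  proof -
    have "M * (\<Sum>x\<in>?V. a x * b x) = (\<Sum>x\<in>?V. \<Sum>y\<in>?V. a (updS R x y) * b (updS R x y))"
      unfolding M_def by (rule swap_sum[symmetric])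
    also have "\<dots> = (\<Sum>x\<in>?V. b x * A x)"
      by (simp add: bR A_def sum_distrib_left mult.commute)
    finally show ?thesis using Mp by (simp add: field_simps)
  qed
  have s2: "(\<Sum>x\<in>?V. b x * A x)^2 \<le> (\<Sum>x\<in>?V. p x) * (\<Sum>x\<in>?V. p x * (A x)^2)"
    by (rule weighted_CS2[OF ZN_vecs_finite bp])
  define \<Phi> where "\<Phi> x = p x * a x * a (updS R x (\<lambda>l. x (\<pi> l)))" for x
  have disjR: "R \<inter> \<pi> ` R = {}" using disj by auto
  have c1: "updS R (updS R x y) (\<lambda>l. updS R x y (\<pi> l)) = updS R x (\<lambda>l. x (\<pi> l))" for x y
    using disj by (auto simp: updS_def fun_eq_iff)
  have c2: "updS R (updS (\<pi>`R) x y') y = updS (\<pi>`R) (updS R x y) y'" for x y y'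
    using disjR by (auto simp: updS_def fun_eq_iff)
  have c3: "updS R (updS (\<pi>`R) x y') (\<lambda>l. updS (\<pi>`R) x y' (\<pi> l))
            = updS (\<pi>`R) (updS R x (\<lambda>l. y' (\<pi> l))) y'" for x y'
    using disjR by (auto simp: updS_def fun_eq_iff)
  have c4: "updS R z (\<lambda>l. updS (\<pi>`R) x y' (\<pi> l)) = updS R z (\<lambda>l. y' (\<pi> l))" for x y' z
    by (auto simp: updS_def fun_eq_iff)
  have s4: "M * M * (\<Sum>x\<in>?V. \<Phi> x) = (\<Sum>x\<in>?V. \<Sum>y'\<in>?V. \<Sum>y\<in>?V. p x * a (updS R x y) * a (updS R x (\<lambda>l. y' (\<pi> l))))"
  proof -
    have "M * (\<Sum>x\<in>?V. \<Phi> x) = (\<Sum>x\<in>?V. \<Sum>y\<in>?V. \<Phi> (updS R x y))"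
      unfolding M_def by (rule swap_sum[symmetric])
    also have "\<dots> = (\<Sum>x\<in>?V. \<Sum>y\<in>?V. p x * a (updS R x y) * a (updS R x (\<lambda>l. x (\<pi> l))))"
      unfolding \<Phi>_def by (simp add: pR c1)
    finally have e1: "M * (\<Sum>x\<in>?V. \<Phi> x) = (\<Sum>x\<in>?V. \<Sum>y\<in>?V. p x * a (updS R x y) * a (updS R x (\<lambda>l. x (\<pi> l))))" .
    define \<Psi> where "\<Psi> x = (\<Sum>y\<in>?V. p x * a (updS R x y) * a (updS R x (\<lambda>l. x (\<pi> l))))" for x
    have "M * (\<Sum>x\<in>?V. \<Psi> x) = (\<Sum>x\<in>?V. \<Sum>y'\<in>?V. \<Psi> (updS (\<pi>`R) x y'))"
      unfolding M_def by (rule swap_sum[symmetric])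
    also have "\<dots> = (\<Sum>x\<in>?V. \<Sum>y'\<in>?V. \<Sum>y\<in>?V. p x * a (updS R x y) * a (updS R x (\<lambda>l. y' (\<pi> l))))"
      unfolding \<Psi>_def by (simp add: p\<pi>R c2 c3 c4 a\<pi>R)
    finally have e2: "M * (\<Sum>x\<in>?V. \<Psi> x) = (\<Sum>x\<in>?V. \<Sum>y'\<in>?V. \<Sum>y\<in>?V. p x * a (updS R x y) * a (updS R x (\<lambda>l. y' (\<pi> l))))" .
    have "M * M * (\<Sum>x\<in>?V. \<Phi> x) = M * (\<Sum>x\<in>?V. \<Psi> x)" using e1 unfolding \<Psi>_def by simp
    then show ?thesis using e2 by simp
  qed
  have s5: "(\<Sum>x\<in>?V. \<Sum>y'\<in>?V. \<Sum>y\<in>?V. p x * a (updS R x y) * a (updS R x (\<lambda>l. y' (\<pi> l))))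
          = (\<Sum>x\<in>?V. p x * (A x)^2)"
  proof (rule sum.cong[OF refl])
    fix x
    have "(\<Sum>y'\<in>?V. \<Sum>y\<in>?V. p x * a (updS R x y) * a (updS R x (\<lambda>l. y' (\<pi> l))))
        = (\<Sum>y'\<in>?V. p x * A x * a (updS R x (\<lambda>l. y' (\<pi> l))))"
      by (simp add: A_def sum_distrib_left sum_distrib_right)
    also have "\<dots> = (\<Sum>y'\<in>?V. p x * A x * a (updS R x y'))"
      by (rule perm_sum[OF R \<pi>t \<pi>inv, of "\<lambda>z. p x * A x * a z"])
    also have "\<dots> = p x * (A x)^2"
      by (simp add: A_def sum_distrib_left sum_distrib_right power2_eq_square mult.assoc)
    finally show "(\<Sum>y'\<in>?V. \<Sum>y\<in>?V. p x * a (updS R x y) * a (updS R x (\<lambda>l. y' (\<pi> l)))) = p x * (A x)^2" .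
  qed
  have key: "(\<Sum>x\<in>?V. \<Phi> x) = (1/(M*M)) * (\<Sum>x\<in>?V. p x * (A x)^2)"
    using s4 s5 Mp by (simp add: field_simps)
  have p0: "p x \<ge> 0" for x using bp[of x] by linarith
  have nn: "0 \<le> (\<Sum>x\<in>?V. p x * (A x)^2)" using p0 by (intro sum_nonneg) simp
  show "0 \<le> (\<Sum>x\<in>?V. p x * a x * a (updS R x (\<lambda>l. x (\<pi> l))))"
    using key nn Mp unfolding \<Phi>_def by simp
  have "(\<Sum>x\<in>?V. a x * b x)^2 = (1/(M*M)) * (\<Sum>x\<in>?V. b x * A x)^2"
    using s1 by (simp add: power2_eq_square)
  also have "\<dots> \<le> (1/(M*M)) * ((\<Sum>x\<in>?V. p x) * (\<Sum>x\<in>?V. p x * (A x)^2))"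
    using s2 Mp by (intro mult_left_mono) auto
  also have "\<dots> = (\<Sum>x\<in>?V. p x) * (\<Sum>x\<in>?V. \<Phi> x)" using key by simp
  finally show "(\<Sum>x\<in>?V. a x * b x)^2
          \<le> (\<Sum>x\<in>?V. p x) * (\<Sum>x\<in>?V. p x * a x * a (updS R x (\<lambda>l. x (\<pi> l))))"
    unfolding \<Phi>_def .
qed


definition avgV :: "nat \<Rightarrow> nat \<Rightarrow> ((nat \<Rightarrow> int) \<Rightarrow> real) \<Rightarrow> real" where
  "avgV N t H = (\<Sum>x\<in>ZN_vecs N t. H x) / real (N ^ t)"

lemma CS_coord_avg:
  fixes a b p :: "(nat \<Rightarrow> int) \<Rightarrow> real" and \<pi> :: "nat \<Rightarrow> nat"
  assumes N: "N > 0"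
    and R: "R \<subseteq> {..<t}" and \<pi>t: "\<forall>l<t. \<pi> l < t" and \<pi>inv: "\<forall>l<t. \<pi> (\<pi> l) = l"
    and disj: "\<forall>l\<in>R. \<pi> l \<notin> R"
    and bR: "\<And>x y. b (updS R x y) = b x" and b\<pi>R: "\<And>x y. b (updS (\<pi>`R) x y) = b x"
    and pR: "\<And>x y. p (updS R x y) = p x" and p\<pi>R: "\<And>x y. p (updS (\<pi>`R) x y) = p x"
    and a\<pi>R: "\<And>x y. a (updS (\<pi>`R) x y) = a x"
    and bp: "\<And>x. \<bar>b x\<bar> \<le> p x"
  shows "(avgV N t (\<lambda>x. a x * b x))^2
          \<le> avgV N t p * avgV N t (\<lambda>x. p x * a x * a (updS R x (\<lambda>l. x (\<pi> l))))"
    and "0 \<le> avgV N t (\<lambda>x. p x * a x * a (updS R x (\<lambda>l. x (\<pi> l))))"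
proof -
  note cs = CS_coord[OF assms]
  have M: "real (N^t) > 0" using N by simp
  show "0 \<le> avgV N t (\<lambda>x. p x * a x * a (updS R x (\<lambda>l. x (\<pi> l))))"
    unfolding avgV_def using cs(2) M by simp
  show "(avgV N t (\<lambda>x. a x * b x))^2
          \<le> avgV N t p * avgV N t (\<lambda>x. p x * a x * a (updS R x (\<lambda>l. x (\<pi> l))))"
    unfolding avgV_def using cs(1) M by (simp add: power_divide divide_le_cancel power2_eq_square
        del: of_nat_power)
qed

definition vx :: "nat \<Rightarrow> nat set \<Rightarrow> (nat \<Rightarrow> int) \<Rightarrow> nat \<Rightarrow> int" where
  "vx K \<omega> x = (\<lambda>l. if l < K then (if l \<in> \<omega> then x l else x (K + l)) else 0)"

lemma vx_upd1: "i \<notin> \<omega> \<Longrightarrow> i < K \<Longrightarrow> vx K \<omega> (updS {i} x y) = vx K \<omega> x"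
  by (auto simp: vx_def updS_def fun_eq_iff)

lemma vx_upd2: "i \<notin> \<omega> \<Longrightarrow> i < K \<Longrightarrow> vx K \<omega> (updS {K+i} x y) = (vx K \<omega> x)(i := y (K+i))"
  by (auto simp: vx_def updS_def fun_eq_iff)

definition swp :: "nat \<Rightarrow> nat \<Rightarrow> nat \<Rightarrow> nat" where
  "swp i j l = (if l = i then j else if l = j then i else l)"

lemma vx_ins: "i \<notin> \<omega> \<Longrightarrow> i < K \<Longrightarrow>
   vx K (insert i \<omega>) x = vx K \<omega> (updS {K+i} x (\<lambda>l. x (swp i (K+i) l)))"
  by (auto simp: vx_def updS_def swp_def fun_eq_iff)

locale cube =
  fixes N K T :: nat and G0 :: "(nat \<Rightarrow> int) \<Rightarrow> real" and G Vw :: "nat \<Rightarrow> (nat \<Rightarrow> int) \<Rightarrow> real"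
  assumes N: "N > 0" and KT: "2 * K \<le> T"
    and Gind: "\<And>i y s. i < K \<Longrightarrow> G i (y(i := s)) = G i y"
    and Vind: "\<And>i y s. i < K \<Longrightarrow> Vw i (y(i := s)) = Vw i y"
    and GV: "\<And>i y. i < K \<Longrightarrow> \<bar>G i y\<bar> \<le> Vw i y"
begin

definition trm :: "nat set \<Rightarrow> nat set \<Rightarrow> (nat \<Rightarrow> int) \<Rightarrow> real" where
  "trm D \<omega> x = G0 (vx K \<omega> x) * (\<Prod>j\<in>D-\<omega>. Vw j (vx K \<omega> x)) * (\<Prod>j\<in>{..<K}-D. G j (vx K \<omega> x))"

definition Tst :: "nat set \<Rightarrow> real" where
  "Tst D = avgV N T (\<lambda>x. \<Prod>\<omega>\<in>Pow D. trm D \<omega> x)"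

definition Anorm :: "nat set \<Rightarrow> nat \<Rightarrow> real" where
  "Anorm D i = avgV N T (\<lambda>x. \<Prod>\<omega>\<in>Pow D. Vw i (vx K \<omega> x))"

lemma V0: "i < K \<Longrightarrow> Vw i y \<ge> 0" using GV[of i y] by linarith

lemma Anorm_nonneg: "i < K \<Longrightarrow> Anorm D i \<ge> 0"
  unfolding Anorm_def avgV_def using V0 by (intro divide_nonneg_nonneg sum_nonneg prod_nonneg) auto

lemma step:
  assumes D: "D \<subseteq> {..<K}" and i: "i < K" "i \<notin> D"
  shows "(Tst D)^2 \<le> Anorm D i * Tst (insert i D)" and "0 \<le> Tst (insert i D)"
proof -
  define \<pi> where "\<pi> = swp i (K+i)"
  define rest where "rest \<omega> x = G0 (vx K \<omega> x) * (\<Prod>j\<in>D-\<omega>. Vw j (vx K \<omega> x)) * (\<Prod>j\<in>{..<K}-D-{i}. G j (vx K \<omega> x))" for \<omega> x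
  define a where "a x = (\<Prod>\<omega>\<in>Pow D. rest \<omega> x)" for x
  define b where "b x = (\<Prod>\<omega>\<in>Pow D. G i (vx K \<omega> x))" for x
  define p where "p x = (\<Prod>\<omega>\<in>Pow D. Vw i (vx K \<omega> x))" for x
  have niD: "\<And>\<omega>. \<omega> \<in> Pow D \<Longrightarrow> i \<notin> \<omega>" using i by auto
  have \<pi>R: "\<pi> ` {K+i} = {i}" by (simp add: \<pi>_def swp_def)
  have h1: "{K+i} \<subseteq> {..<T}" using i(1) KT by (simp add: subset_iff)
  have h2: "\<forall>l<T. \<pi> l < T" using i KT by (auto simp: \<pi>_def swp_def)
  have h3: "\<forall>l<T. \<pi> (\<pi> l) = l" using i by (auto simp: \<pi>_def swp_def)
  have h4: "\<forall>l\<in>{K+i}. \<pi> l \<notin> {K+i}" using i by (auto simp: \<pi>_def swp_def)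
  have h5: "b (updS {K+i} x y) = b x" for x y unfolding b_def using niD i
      by (intro prod.cong refl) (simp add: vx_upd2 Gind)
  have h6: "b (updS (\<pi>`{K+i}) x y) = b x" for x y unfolding b_def \<pi>R using niD i
      by (intro prod.cong refl) (simp add: vx_upd1)
  have h7: "p (updS {K+i} x y) = p x" for x y unfolding p_def using niD i
      by (intro prod.cong refl) (simp add: vx_upd2 Vind)
  have h8: "p (updS (\<pi>`{K+i}) x y) = p x" for x y unfolding p_def \<pi>R using niD i
      by (intro prod.cong refl) (simp add: vx_upd1)
  have h9: "a (updS (\<pi>`{K+i}) x y) = a x" for x y unfolding a_def \<pi>R using niD i
      by (intro prod.cong refl) (simp add: vx_upd1 rest_def)
  have h10: "\<bar>b x\<bar> \<le> p x" for x unfolding b_def p_def using i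
      by (simp add: abs_prod GV prod_mono)
  note cs = CS_coord_avg[OF N h1 h2 h3 h4 h5 h6 h7 h8 h9 h10]
  have KD: "{..<K} - D = insert i ({..<K} - D - {i})" using i by auto
  have t1: "trm D \<omega> x = G i (vx K \<omega> x) * rest \<omega> x" for \<omega> x
    unfolding trm_def rest_def by (subst KD) (simp add: prod.insert_remove)
  have e1: "Tst D = avgV N T (\<lambda>x. a x * b x)"
    unfolding Tst_def a_def b_def t1 by (simp add: prod.distrib mult.commute)
  have e2: "Anorm D i = avgV N T p" unfolding Anorm_def p_def ..
  have PowI: "Pow (insert i D) = Pow D \<union> insert i ` Pow D" by (rule Pow_insert)
  have disjP: "Pow D \<inter> insert i ` Pow D = {}" using i by auto
  have injP: "inj_on (insert i) (Pow D)" using i by (auto simp: inj_on_def)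
  have ta: "trm (insert i D) \<omega> x = Vw i (vx K \<omega> x) * rest \<omega> x" if "\<omega> \<in> Pow D" for \<omega> x
  proof -
    have "insert i D - \<omega> = insert i (D - \<omega>)" using niD[OF that] by auto
    moreover have "{..<K} - insert i D = {..<K} - D - {i}" by auto
    moreover have "i \<notin> D - \<omega>" using i by auto
    moreover have "finite (D - \<omega>)" using finite_subset[OF D] by blast
    ultimately show ?thesis unfolding trm_def rest_def by (simp add: algebra_simps)
  qed
  have tb: "trm (insert i D) (insert i \<omega>) x = rest \<omega> (updS {K+i} x (\<lambda>l. x (\<pi> l)))" if "\<omega> \<in> Pow D" for \<omega> x
  proof -
    have "insert i D - insert i \<omega> = D - \<omega>" using i by auto
    moreover have "{..<K} - insert i D = {..<K} - D - {i}" by auto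
    ultimately show ?thesis unfolding trm_def rest_def \<pi>_def
      using vx_ins[OF niD[OF that] i(1), of x] by simp
  qed
  have e3: "Tst (insert i D) = avgV N T (\<lambda>x. p x * a x * a (updS {K+i} x (\<lambda>l. x (\<pi> l))))"
  proof -
    have "(\<Prod>\<omega>\<in>Pow (insert i D). trm (insert i D) \<omega> x) = p x * a x * a (updS {K+i} x (\<lambda>l. x (\<pi> l)))" for x
    proof -
      have "(\<Prod>\<omega>\<in>Pow (insert i D). trm (insert i D) \<omega> x)
          = (\<Prod>\<omega>\<in>Pow D. trm (insert i D) \<omega> x) * (\<Prod>\<omega>\<in>insert i ` Pow D. trm (insert i D) \<omega> x)"
        unfolding PowI using disjP finite_subset[OF D] by (intro prod.union_disjoint) auto
      also have "(\<Prod>\<omega>\<in>insert i ` Pow D. trm (insert i D) \<omega> x) = (\<Prod>\<omega>\<in>Pow D. trm (insert i D) (insert i \<omega>) x)"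
        by (rule prod.reindex[OF injP, unfolded comp_def])
      also have "\<dots> = a (updS {K+i} x (\<lambda>l. x (\<pi> l)))" unfolding a_def by (intro prod.cong refl tb)
      also have "(\<Prod>\<omega>\<in>Pow D. trm (insert i D) \<omega> x) = p x * a x"
        unfolding p_def a_def by (simp add: ta prod.distrib)
      finally show ?thesis by simp
    qed
    then show ?thesis unfolding Tst_def by simp
  qed
  show "(Tst D)^2 \<le> Anorm D i * Tst (insert i D)" using cs(1) e1 e2 e3 by simp
  show "0 \<le> Tst (insert i D)" using cs(2) e3 by simp
qed

end


context cube begin

lemma iterate:
  assumes B: "\<And>D i. D \<subseteq> {..<K} \<Longrightarrow> i < K \<Longrightarrow> i \<notin> D \<Longrightarrow> Anorm D i \<le> B"
  shows "n \<le> K \<Longrightarrow> \<bar>Tst {}\<bar>^(2^n) \<le> B^(2^n - 1) * \<bar>Tst {..<n}\<bar> \<and> (n \<ge> 1 \<longrightarrow> Tst {..<n} \<ge> 0)"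
proof (induction n)
  case 0 then show ?case by simp
next
  case (Suc n)
  then have IH: "\<bar>Tst {}\<bar>^(2^n) \<le> B^(2^n - 1) * \<bar>Tst {..<n}\<bar>" and nK: "n < K" by auto
  have st: "(Tst {..<n})^2 \<le> Anorm {..<n} n * Tst (insert n {..<n})" "0 \<le> Tst (insert n {..<n})"
    using step[of "{..<n}" n] nK by auto
  have ins: "insert n {..<n} = {..<Suc n}" by auto
  have A0: "0 \<le> Anorm {..<n} n" using Anorm_nonneg nK by simp
  have AB: "Anorm {..<n} n \<le> B" using B[of "{..<n}" n] nK by auto
  have B0: "0 \<le> B" using A0 AB by linarith
  have T1: "0 \<le> Tst {..<Suc n}" using st(2) ins by simp
  have "\<bar>Tst {}\<bar>^(2^Suc n) = (\<bar>Tst {}\<bar>^(2^n))^2" by (simp add: power_mult[symmetric] mult.commute)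
  also have "\<dots> \<le> (B^(2^n - 1) * \<bar>Tst {..<n}\<bar>)^2"
    using IH by (intro power_mono) auto
  also have "\<dots> = B^(2 * (2^n - 1)) * (Tst {..<n})^2"
    by (simp add: power_mult_distrib power_mult[symmetric] mult.commute)
  also have "\<dots> \<le> B^(2 * (2^n - 1)) * (B * Tst {..<Suc n})"
  proof (intro mult_left_mono)
    have "(Tst {..<n})^2 \<le> Anorm {..<n} n * Tst {..<Suc n}" using st(1) ins by simp
    also have "\<dots> \<le> B * Tst {..<Suc n}" using AB T1 by (intro mult_right_mono) auto
    finally show "(Tst {..<n})^2 \<le> B * Tst {..<Suc n}" .
  qed (use B0 in simp)
  also have "\<dots> = B^(2^Suc n - 1) * \<bar>Tst {..<Suc n}\<bar>"
  proof -
    have "2 * (2^n - 1) + 1 = (2::nat)^Suc n - 1" by (induction n) auto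
    then have "B^(2 * (2^n - 1)) * B = B^(2^Suc n - 1)" by (metis power_add power_one_right)
    then show ?thesis using T1 by (simp add: mult.assoc[symmetric])
  qed
  finally show ?case using T1 by simp
qed

end


lemma mod_in_ZN: "N > 0 \<Longrightarrow> (z::int) mod int N \<in> ZN N"
  unfolding ZN_def by auto

lemma ZN_mod: "z \<in> ZN N \<Longrightarrow> z mod int N = z"
  unfolding ZN_def by auto

lemma mod_sum_mult: "(\<Sum>l\<in>A. (e l::int) * (z l mod m)) mod m = (\<Sum>l\<in>A. e l * z l) mod m"
proof -
  have "(\<Sum>l\<in>A. e l * (z l mod m)) mod m = (\<Sum>l\<in>A. (e l * (z l mod m)) mod m) mod m"
    by (simp add: mod_sum_eq)
  also have "\<dots> = (\<Sum>l\<in>A. (e l * z l) mod m) mod m" by (simp add: mod_mult_right_eq)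
  also have "\<dots> = (\<Sum>l\<in>A. e l * z l) mod m" by (simp add: mod_sum_eq)
  finally show ?thesis .
qed

lemma mod_cancel_ZN:
  assumes "x \<in> ZN N" "y \<in> ZN N" "(x + c) mod int N = (y + c) mod int N"
  shows "x = y"
proof -
  have "x mod int N = y mod int N" using assms(3) by (simp add: mod_eq_dvd_iff)
  then show ?thesis using assms(1,2) by (simp add: ZN_mod)
qed

lemma mod_dil_inj:
  assumes p: "prime N" and d: "\<not> int N dvd d" and xy: "x \<in> ZN N" "y \<in> ZN N"
    and e: "(d * x + c) mod int N = (d * y + c) mod int N"
  shows "x = y"
proof -
  have "int N dvd d * x - d * y" using e by (simp add: mod_eq_dvd_iff)
  then have "int N dvd d * (x - y)" by (simp add: right_diff_distrib)
  moreover have "prime (int N)" using p by simp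
  ultimately have "int N dvd (x - y)" using d prime_dvd_mult_iff by blast
  then have "x mod int N = y mod int N" by (simp add: mod_eq_dvd_iff)
  then show ?thesis using xy by (simp add: ZN_mod)
qed

locale setting =
  fixes N k a :: nat and nu :: "int \<Rightarrow> real" and g :: "nat \<Rightarrow> int \<Rightarrow> real"
  assumes prime: "prime N" and k2: "k \<ge> 2" and ak: "a \<le> k" and Nbig: "N > 2 * k * k"
    and nu0: "\<And>x. x \<in> ZN N \<Longrightarrow> nu x \<ge> 0"
    and gb: "\<And>j x. j \<le> k \<Longrightarrow> x \<in> ZN N \<Longrightarrow> \<bar>g j x\<bar> \<le> nu x"
begin

lemma N0: "N > 0" using prime prime_gt_0_nat by blast

definition cc :: "nat \<Rightarrow> nat" where "cc l = (if l < a then l else Suc l)"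
definition ee :: "nat \<Rightarrow> nat \<Rightarrow> int" where "ee j l = int (cc l) - int j"
definition dd :: "nat \<Rightarrow> int" where "dd = ee a"
definition phi :: "(nat \<Rightarrow> int) \<Rightarrow> (nat \<Rightarrow> int) \<Rightarrow> int" where "phi e y = (\<Sum>l<k. e l * y l)"

definition G0 :: "(nat \<Rightarrow> int) \<Rightarrow> real" where "G0 y = g a (phi dd y mod int N)"
definition GG :: "nat \<Rightarrow> (nat \<Rightarrow> int) \<Rightarrow> real" where "GG i y = g (cc i) (phi (ee (cc i)) y mod int N)"
definition VV :: "nat \<Rightarrow> (nat \<Rightarrow> int) \<Rightarrow> real" where "VV i y = nu (phi (ee (cc i)) y mod int N)"

lemma cc_le: "l < k \<Longrightarrow> cc l \<le> k" unfolding cc_def by auto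
lemma cc_ne: "cc l \<noteq> a" unfolding cc_def by auto
lemma cc_inj: "cc l = cc m \<Longrightarrow> l = m" unfolding cc_def by (auto split: if_splits)
lemma ee_zero: "ee (cc i) l = 0 \<longleftrightarrow> l = i" unfolding ee_def using cc_inj by auto
lemma dd_nz: "dd l \<noteq> 0" unfolding dd_def ee_def using cc_ne by auto
lemma ee_bound: "l < k \<Longrightarrow> j \<le> k \<Longrightarrow> \<bar>ee j l\<bar> \<le> int k"
  unfolding ee_def using cc_le[of l] by auto

lemma phi_upd_ind: "phi (ee (cc i)) (y(i := s)) = phi (ee (cc i)) y"
  unfolding phi_def by (intro sum.cong refl) (auto simp: ee_def)

sublocale cube N k "4*k" G0 GG VV
proof
  show "N > 0" by (rule N0)
  show "2 * k \<le> 4 * k" by simp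
  show "GG i (y(i := s)) = GG i y" if "i < k" for i y s unfolding GG_def by (simp add: phi_upd_ind)
  show "VV i (y(i := s)) = VV i y" if "i < k" for i y s unfolding VV_def by (simp add: phi_upd_ind)
  show "\<bar>GG i y\<bar> \<le> VV i y" if "i < k" for i y unfolding GG_def VV_def
    using that by (intro gb cc_le mod_in_ZN N0)
qed

end


lemma avgV_diff: "avgV N t (\<lambda>x. f x - h x) = avgV N t f - avgV N t h"
  unfolding avgV_def by (simp add: sum_subtractf diff_divide_distrib)
lemma avgV_add: "avgV N t (\<lambda>x. f x + h x) = avgV N t f + avgV N t h"
  unfolding avgV_def by (simp add: sum.distrib add_divide_distrib)
lemma avgV_cong: "(\<And>x. x \<in> ZN_vecs N t \<Longrightarrow> f x = h x) \<Longrightarrow> avgV N t f = avgV N t h"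
  unfolding avgV_def by (metis (no_types, lifting) sum.cong)
lemma avgV_mono: "(\<And>x. x \<in> ZN_vecs N t \<Longrightarrow> f x \<le> h x) \<Longrightarrow> avgV N t f \<le> avgV N t h"
  unfolding avgV_def by (intro divide_right_mono sum_mono) auto
lemma avgV_bij: "(\<And>x. x \<in> ZN_vecs N t \<Longrightarrow> \<tau> x \<in> ZN_vecs N t) \<Longrightarrow> inj_on \<tau> (ZN_vecs N t)
   \<Longrightarrow> avgV N t (\<lambda>x. H (\<tau> x)) = avgV N t H"
  unfolding avgV_def using bij_sum[of N t \<tau> H] by simp

lemma sum_split_add: "(\<Sum>p<m+n. F p) = (\<Sum>p<m. F p) + (\<Sum>l<n. F (m + l))" for m n :: nat
  by (induction n) (auto simp: add.commute add.left_commute)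

context setting begin

definition vform :: "(nat \<Rightarrow> int) \<Rightarrow> nat set \<Rightarrow> nat \<Rightarrow> int" where
  "vform e \<omega> p = (if p < k then (if p \<in> \<omega> then e p else 0)
                  else if p < 2*k then (if p - k \<in> \<omega> then 0 else e (p - k)) else 0)"

lemma phi_vx: "phi e (vx k \<omega> x) = (\<Sum>p<4*k. vform e \<omega> p * x p)"
proof -
  have "(\<Sum>p<4*k. vform e \<omega> p * x p) = (\<Sum>p<k + (k + 2*k). vform e \<omega> p * x p)" by simp
  also have "\<dots> = (\<Sum>p<k. vform e \<omega> p * x p) + (\<Sum>l<k + 2*k. vform e \<omega> (k+l) * x (k+l))"
    by (rule sum_split_add)
  also have "(\<Sum>l<k + 2*k. vform e \<omega> (k+l) * x (k+l)) = (\<Sum>l<k. vform e \<omega> (k+l) * x (k+l))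
       + (\<Sum>m<2*k. vform e \<omega> (k+(k+m)) * x (k+(k+m)))"
    by (rule sum_split_add)
  also have "(\<Sum>m<2*k. vform e \<omega> (k+(k+m)) * x (k+(k+m))) = 0"
    by (simp add: vform_def)
  also have "(\<Sum>p<k. vform e \<omega> p * x p) = (\<Sum>l<k. (if l \<in> \<omega> then e l * x l else 0))"
    by (intro sum.cong refl) (simp add: vform_def)
  also have "(\<Sum>l<k. vform e \<omega> (k+l) * x (k+l)) = (\<Sum>l<k. (if l \<in> \<omega> then 0 else e l * x (k+l)))"
    by (intro sum.cong refl) (simp add: vform_def)
  finally have "(\<Sum>p<4*k. vform e \<omega> p * x p)
      = (\<Sum>l<k. (if l \<in> \<omega> then e l * x l else 0)) + (\<Sum>l<k. (if l \<in> \<omega> then 0 else e l * x (k+l)))"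
    by simp
  also have "\<dots> = (\<Sum>l<k. e l * vx k \<omega> x l)"
    unfolding sum.distrib[symmetric] by (intro sum.cong refl) (simp add: vx_def)
  finally show ?thesis unfolding phi_def by simp
qed

definition wB :: "nat \<Rightarrow> (nat \<Rightarrow> int) \<Rightarrow> nat \<Rightarrow> int" where
  "wB B x q = (if q = 0 then - (\<Sum>r\<in>{1..<k}. dd r * x (B + r)) else if q < k then dd 0 * x (B + q) else 0)"

definition shB :: "nat \<Rightarrow> (nat \<Rightarrow> int) \<Rightarrow> nat \<Rightarrow> int" where
  "shB B x l = (if l < 2*k then (x l + wB B x (l mod k)) mod int N else x l)"

definition wform :: "nat \<Rightarrow> (nat \<Rightarrow> int) \<Rightarrow> nat \<Rightarrow> int" where
  "wform B e p = (if B < p \<and> p < B + k then dd 0 * e (p - B) - dd (p - B) * e 0 else 0)"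

lemma vx_shB: "vx k \<omega> (shB B x) = (\<lambda>l. if l < k then (vx k \<omega> x l + wB B x l) mod int N else 0)"
  by (auto simp: vx_def shB_def fun_eq_iff)

lemma sum_wB: "(\<Sum>l<k. e l * wB B x l) = (\<Sum>q\<in>{1..<k}. (dd 0 * e q - dd q * e 0) * x (B + q))"
proof -
  have k0: "k > 0" using k2 by simp
  have "{..<k} = insert 0 {1..<k}" using k0 by auto
  then have "(\<Sum>l<k. e l * wB B x l) = e 0 * wB B x 0 + (\<Sum>l\<in>{1..<k}. e l * wB B x l)"
    by simp
  also have "\<dots> = - (\<Sum>r\<in>{1..<k}. e 0 * dd r * x (B + r)) + (\<Sum>l\<in>{1..<k}. e l * dd 0 * x (B + l))"
    by (simp add: wB_def sum_distrib_left mult.assoc)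
  also have "\<dots> = (\<Sum>q\<in>{1..<k}. (dd 0 * e q - dd q * e 0) * x (B + q))"
    by (simp add: sum_subtractf[symmetric] algebra_simps)
  finally show ?thesis .
qed

lemma sum_wform:
  assumes "B + k \<le> 4*k"
  shows "(\<Sum>q\<in>{1..<k}. (dd 0 * e q - dd q * e 0) * x (B + q)) = (\<Sum>p<4*k. wform B e p * x p)"
proof -
  have "(\<Sum>p<4*k. wform B e p * x p) = (\<Sum>p\<in>{p\<in>{..<4*k}. B < p \<and> p < B + k}. (dd 0 * e (p - B) - dd (p - B) * e 0) * x p)"
  proof -
    have "wform B e p * x p = (if B < p \<and> p < B + k then (dd 0 * e (p - B) - dd (p - B) * e 0) * x p else 0)" for p
      unfolding wform_def by simp
    then show ?thesis
      using sum.inter_filter[of "{..<4*k}" "\<lambda>p. (dd 0 * e (p - B) - dd (p - B) * e 0) * x p" "\<lambda>p. B < p \<and> p < B + k"]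
      by simp
  qed
  also have "{p\<in>{..<4*k}. B < p \<and> p < B + k} = (\<lambda>q. B + q) ` {1..<k}"
    using assms by (auto simp: image_iff)
  also have "(\<Sum>p\<in>(\<lambda>q. B + q) ` {1..<k}. (dd 0 * e (p - B) - dd (p - B) * e 0) * x p)
      = (\<Sum>q\<in>{1..<k}. (dd 0 * e q - dd q * e 0) * x (B + q))"
    by (subst sum.reindex) (auto simp: inj_on_def)
  finally show ?thesis ..
qed

lemma phi_vx_shB:
  assumes "B + k \<le> 4*k"
  shows "phi e (vx k \<omega> (shB B x)) mod int N = (\<Sum>p<4*k. (vform e \<omega> p + wform B e p) * x p) mod int N"
proof -
  have "phi e (vx k \<omega> (shB B x)) mod int N = (\<Sum>l<k. e l * ((vx k \<omega> x l + wB B x l) mod int N)) mod int N"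
    unfolding phi_def vx_shB by simp
  also have "\<dots> = (\<Sum>l<k. e l * (vx k \<omega> x l + wB B x l)) mod int N" by (rule mod_sum_mult)
  also have "(\<Sum>l<k. e l * (vx k \<omega> x l + wB B x l)) = phi e (vx k \<omega> x) + (\<Sum>l<k. e l * wB B x l)"
    unfolding phi_def by (simp add: algebra_simps sum.distrib)
  also have "\<dots> = (\<Sum>p<4*k. (vform e \<omega> p + wform B e p) * x p)"
    unfolding phi_vx sum_wB sum_wform[OF assms] by (simp add: algebra_simps sum.distrib)
  finally show ?thesis .
qed

lemma phi_dd_shB: "phi dd (vx k \<omega> (shB B x)) mod int N = phi dd (vx k \<omega> x) mod int N"
proof -
  have "phi dd (vx k \<omega> (shB B x)) mod int N = (\<Sum>l<k. dd l * ((vx k \<omega> x l + wB B x l) mod int N)) mod int N"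
    unfolding phi_def vx_shB by simp
  also have "\<dots> = (\<Sum>l<k. dd l * (vx k \<omega> x l + wB B x l)) mod int N" by (rule mod_sum_mult)
  also have "(\<Sum>l<k. dd l * (vx k \<omega> x l + wB B x l)) = phi dd (vx k \<omega> x) + (\<Sum>l<k. dd l * wB B x l)"
    unfolding phi_def by (simp add: algebra_simps sum.distrib)
  also have "(\<Sum>l<k. dd l * wB B x l) = 0" unfolding sum_wB by (simp add: mult.commute)
  finally show ?thesis by simp
qed

end


context setting begin

definition PP :: "(nat \<Rightarrow> int) \<Rightarrow> real" where
  "PP x = (\<Prod>\<omega>\<in>Pow {..<k}. nu (phi dd (vx k \<omega> x) mod int N))"
definition FF :: "(nat \<Rightarrow> int) \<Rightarrow> real" where
  "FF x = (\<Prod>\<omega>\<in>Pow {..<k}. G0 (vx k \<omega> x))"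
definition WW :: "(nat \<Rightarrow> int) \<Rightarrow> real" where
  "WW x = (\<Prod>\<omega>\<in>Pow {..<k}. \<Prod>i\<in>{..<k}-\<omega>. VV i (vx k \<omega> x))"
definition Uval :: real where "Uval = avgV N (4*k) FF"

definition Rb :: "nat set" where "Rb = {l. 2*k < l \<and> l < 3*k}"
definition pib :: "nat \<Rightarrow> nat" where
  "pib l = (if 2*k < l \<and> l < 3*k then l + k else if 3*k < l \<and> l < 4*k then l - k else l)"

lemma Tst_final: "Tst {..<k} = avgV N (4*k) (\<lambda>x. FF x * WW x)"
  unfolding Tst_def trm_def FF_def WW_def by (simp add: prod.distrib)

lemma vx_updS_high:
  assumes "\<And>l. l \<in> S \<Longrightarrow> 2*k \<le> l" shows "vx k \<omega> (updS S x y) = vx k \<omega> x"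
proof -
  have "l \<notin> S" "k + l \<notin> S" if "l < k" for l using that assms by force+
  then show ?thesis by (auto simp: vx_def updS_def fun_eq_iff)
qed

lemma wB_updS:
  assumes "\<And>l. l \<in> S \<Longrightarrow> B + k \<le> l \<or> l \<le> B" shows "wB B (updS S x y) = wB B x"
proof -
  have h: "B + q \<notin> S" if "0 < q" "q < k" for q using that assms by force
  show ?thesis unfolding wB_def updS_def using h by (auto simp: fun_eq_iff intro!: sum.cong)
qed

lemma shB_in: "x \<in> ZN_vecs N (4*k) \<Longrightarrow> shB B x \<in> ZN_vecs N (4*k)"
  using N0 unfolding ZN_vecs_def shB_def PiE_def Pi_def extensional_def
  by (auto intro: mod_in_ZN)

lemma shB_inj:
  assumes "2*k \<le> B"
  shows "inj_on (shB B) (ZN_vecs N (4*k))"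
proof (rule inj_onI)
  fix x y assume x: "x \<in> ZN_vecs N (4*k)" and y: "y \<in> ZN_vecs N (4*k)" and e: "shB B x = shB B y"
  have hi: "x l = y l" if "l \<ge> 2*k" for l using fun_cong[OF e, of l] that by (simp add: shB_def)
  have w: "wB B x = wB B y" unfolding wB_def using hi assms by (auto simp: fun_eq_iff intro!: sum.cong)
  show "x = y"
  proof
    fix l show "x l = y l"
    proof (cases "l < 2*k")
      case True
      have "(x l + wB B x (l mod k)) mod int N = (y l + wB B x (l mod k)) mod int N"
        using fun_cong[OF e, of l] True w by (simp add: shB_def)
      moreover have "x l \<in> ZN N" "y l \<in> ZN N" using x y True unfolding ZN_vecs_def by auto
      ultimately show ?thesis using mod_cancel_ZN by blast
    qed (use hi in auto)
  qed
qed

lemma FF_shB: "FF (shB B x) = FF x"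
  unfolding FF_def G0_def by (simp add: phi_dd_shB)

lemma FF_PP: "\<bar>FF x\<bar> \<le> PP x"
  unfolding FF_def PP_def G0_def abs_prod
  by (intro prod_mono) (auto intro: gb ak mod_in_ZN N0)

lemma PP0: "PP x \<ge> 0"
  unfolding PP_def by (intro prod_nonneg) (auto intro: nu0 mod_in_ZN N0)

lemma copy_shB: "vx k \<omega> (shB (2*k) (updS Rb x (\<lambda>l. x (pib l)))) = vx k \<omega> (shB (3*k) x)"
proof -
  have w: "wB (2*k) (updS Rb x (\<lambda>l. x (pib l))) = wB (3*k) x"
    unfolding wB_def updS_def Rb_def pib_def
    by (auto simp: fun_eq_iff algebra_simps intro!: sum.cong)
  have v: "vx k \<omega> (updS Rb x (\<lambda>l. x (pib l))) = vx k \<omega> x"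
    by (rule vx_updS_high) (auto simp: Rb_def)
  show ?thesis unfolding vx_shB w v ..
qed

lemma final_CS:
  "(Tst {..<k} - Uval)^2 \<le> avgV N (4*k) PP *
     avgV N (4*k) (\<lambda>x. PP x * (WW (shB (2*k) x) - 1) * (WW (shB (3*k) x) - 1))"
proof -
  let ?a = "\<lambda>x. WW (shB (2*k) x) - 1"
  have "Tst {..<k} - Uval = avgV N (4*k) (\<lambda>x. (WW x - 1) * FF x)"
    unfolding Tst_final Uval_def avgV_diff[symmetric] by (simp add: algebra_simps)
  also have "\<dots> = avgV N (4*k) (\<lambda>x. (WW (shB (2*k) x) - 1) * FF (shB (2*k) x))"
    by (rule avgV_bij[symmetric, of N "4*k" "shB (2*k)" "\<lambda>x. (WW x - 1) * FF x"])
       (auto intro: shB_in shB_inj)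
  also have "\<dots> = avgV N (4*k) (\<lambda>x. ?a x * FF x)" by (simp add: FF_shB)
  finally have e1: "Tst {..<k} - Uval = avgV N (4*k) (\<lambda>x. ?a x * FF x)" .
  have h1: "Rb \<subseteq> {..<4*k}" by (auto simp: Rb_def)
  have h2: "\<forall>l<4*k. pib l < 4*k" by (auto simp: pib_def)
  have h3: "\<forall>l<4*k. pib (pib l) = l" by (auto simp: pib_def)
  have h4: "\<forall>l\<in>Rb. pib l \<notin> Rb" by (auto simp: pib_def Rb_def)
  have pR: "pib ` Rb = {l. 3*k < l \<and> l < 4*k}"
  proof
    show "pib ` Rb \<subseteq> {l. 3*k < l \<and> l < 4*k}" by (auto simp: pib_def Rb_def)
    show "{l. 3*k < l \<and> l < 4*k} \<subseteq> pib ` Rb"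
    proof
      fix l assume "l \<in> {l. 3*k < l \<and> l < 4*k}"
      then have "l - k \<in> Rb" "pib (l - k) = l" by (auto simp: Rb_def pib_def)
      then show "l \<in> pib ` Rb" by (metis image_eqI)
    qed
  qed
  have hiR: "\<And>l. l \<in> Rb \<Longrightarrow> 2*k \<le> l" and hipR: "\<And>l. l \<in> pib ` Rb \<Longrightarrow> 2*k \<le> l"
    unfolding pR by (auto simp: Rb_def)
  have h5: "FF (updS Rb x y) = FF x" for x y unfolding FF_def by (simp add: vx_updS_high[OF hiR])
  have h6: "FF (updS (pib`Rb) x y) = FF x" for x y unfolding FF_def by (simp add: vx_updS_high[OF hipR])
  have h7: "PP (updS Rb x y) = PP x" for x y unfolding PP_def by (simp add: vx_updS_high[OF hiR])
  have h8: "PP (updS (pib`Rb) x y) = PP x" for x y unfolding PP_def by (simp add: vx_updS_high[OF hipR])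
  have h9: "?a (updS (pib`Rb) x y) = ?a x" for x y
  proof -
    have w: "wB (2*k) (updS (pib`Rb) x y) = wB (2*k) x" by (rule wB_updS) (auto simp: pR)
    have v: "vx k \<omega> (updS (pib`Rb) x y) = vx k \<omega> x" for \<omega> by (rule vx_updS_high[OF hipR])
    show ?thesis unfolding WW_def vx_shB w v ..
  qed
  note cs = CS_coord_avg[OF N0 h1 h2 h3 h4 h5 h6 h7 h8 h9 FF_PP]
  have "?a (updS Rb x (\<lambda>l. x (pib l))) = WW (shB (3*k) x) - 1" for x
    unfolding WW_def copy_shB ..
  then show ?thesis using cs(1) e1 by (simp add: mult.commute mult.left_commute)
qed

lemma final_bound:
  assumes d0: "0 \<le> \<delta>"
    and b1: "\<bar>avgV N (4*k) PP - 1\<bar> \<le> \<delta>"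
    and b2: "\<bar>avgV N (4*k) (\<lambda>x. PP x * WW (shB (2*k) x)) - 1\<bar> \<le> \<delta>"
    and b3: "\<bar>avgV N (4*k) (\<lambda>x. PP x * WW (shB (3*k) x)) - 1\<bar> \<le> \<delta>"
    and b4: "\<bar>avgV N (4*k) (\<lambda>x. PP x * WW (shB (2*k) x) * WW (shB (3*k) x)) - 1\<bar> \<le> \<delta>"
  shows "(Tst {..<k} - Uval)^2 \<le> (1 + \<delta>) * (4 * \<delta>)"
proof -
  let ?A = "avgV N (4*k) PP"
  let ?B = "avgV N (4*k) (\<lambda>x. PP x * (WW (shB (2*k) x) - 1) * (WW (shB (3*k) x) - 1))"
  have "?B = avgV N (4*k) (\<lambda>x. PP x * WW (shB (2*k) x) * WW (shB (3*k) x))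
      - avgV N (4*k) (\<lambda>x. PP x * WW (shB (2*k) x)) - avgV N (4*k) (\<lambda>x. PP x * WW (shB (3*k) x))
      + avgV N (4*k) PP"
    unfolding avgV_diff[symmetric] avgV_add[symmetric] by (simp add: algebra_simps)
  then have B4: "?B \<le> 4 * \<delta>" using b1 b2 b3 b4 by linarith
  have A0: "?A \<ge> 0" unfolding avgV_def using PP0 by (intro divide_nonneg_nonneg sum_nonneg) auto
  have A1: "?A \<le> 1 + \<delta>" using b1 by linarith
  have "?A * ?B \<le> (1 + \<delta>) * (4 * \<delta>)"
  proof (cases "?B \<ge> 0")
    case True
    then have "?A * ?B \<le> (1 + \<delta>) * ?B" using A1 by (intro mult_right_mono) auto
    also have "\<dots> \<le> (1 + \<delta>) * (4 * \<delta>)" using B4 d0 by (intro mult_left_mono) auto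
    finally show ?thesis .
  next
    case False
    then have "?A * ?B \<le> 0" using A0 by (simp add: mult_nonneg_nonpos)
    also have "0 \<le> (1 + \<delta>) * (4 * \<delta>)" using d0 by simp
    finally show ?thesis .
  qed
  then show ?thesis using final_CS by linarith
qed

end


lemma NC:
  assumes "p < t" "q < t" "u p = 0" "v p \<noteq> 0" "u q \<noteq> 0"
  shows "\<not> collinear_int t u v"
proof
  assume "collinear_int t u v"
  then consider c where "\<forall>j<t. real_of_int (u j) = c * real_of_int (v j)"
    | c where "\<forall>j<t. real_of_int (v j) = c * real_of_int (u j)"
    unfolding collinear_int_def by blast
  then show False
  proof cases
    case 1
    then have "0 = c * real_of_int (v p)" using assms by (metis of_int_0)
    then have "c = 0" using assms(4) by simp
    then show False using 1 assms by (metis mult_zero_left of_int_eq_0_iff)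
  next
    case 2
    then show False using assms by (metis mult_zero_right of_int_0 of_int_eq_0_iff)
  qed
qed

lemma collinear_sym: "collinear_int t u v = collinear_int t v u"
  unfolding collinear_int_def by blast

context setting begin

definition psi :: "nat \<times> nat \<times> nat set \<Rightarrow> nat \<Rightarrow> int" where
  "psi \<iota> = (case \<iota> of (tg, i, \<omega>) \<Rightarrow>
     (if tg = 0 then vform dd \<omega>
      else if tg = 1 then vform (ee (cc i)) \<omega>
      else if tg = 2 then (\<lambda>p. vform (ee (cc i)) \<omega> p + wform (2*k) (ee (cc i)) p)
      else (\<lambda>p. vform (ee (cc i)) \<omega> p + wform (3*k) (ee (cc i)) p)))"

definition JU :: "(nat \<times> nat \<times> nat set) set" where
  "JU = {(tg, i, \<omega>). (tg = 0 \<and> i = 0 \<and> \<omega> \<subseteq> {..<k}) \<or> (tg \<in> {1,2,3} \<and> i < k \<and> \<omega> \<subseteq> {..<k} \<and> i \<notin> \<omega>)}"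

definition pos :: "nat set \<Rightarrow> nat \<Rightarrow> nat" where "pos \<omega> l = (if l \<in> \<omega> then l else k + l)"

lemma pos_lt: "l < k \<Longrightarrow> pos \<omega> l < 4*k" unfolding pos_def by auto

lemma vform_pos: "l < k \<Longrightarrow> vform e \<omega> (pos \<omega> l) = e l"
  unfolding vform_def pos_def by auto

lemma vform_opp: "l < k \<Longrightarrow> l \<in> \<omega> \<longleftrightarrow> l \<notin> \<omega>' \<Longrightarrow> vform e \<omega> (pos \<omega>' l) = 0"
  unfolding vform_def pos_def by auto

lemma wform_low: "p < 2*k \<Longrightarrow> 2*k \<le> B \<Longrightarrow> wform B e p = 0"
  unfolding wform_def by auto

lemma psi_low: "p < 2*k \<Longrightarrow>
   psi (tg, i, \<omega>) p = (if tg = 0 then vform dd \<omega> p else vform (ee (cc i)) \<omega> p)"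
  by (simp add: psi_def wform_low)

lemma pos_low: "l < k \<Longrightarrow> pos \<omega> l < 2*k" unfolding pos_def by auto

lemma ee_cc_nz: "l \<noteq> i \<Longrightarrow> ee (cc i) l \<noteq> 0" using ee_zero by auto

lemma wcoef: "dd 0 * ee j q - dd q * ee j 0 = (int (cc q) - int (cc 0)) * (int j - int a)"
  unfolding dd_def ee_def by (simp add: algebra_simps)

lemma wform_nz:
  assumes "i < k" shows "wform B (ee (cc i)) (B + 1) \<noteq> 0"
proof -
  have k1: "1 < k" using k2 by simp
  have "cc 1 \<noteq> cc 0" using cc_inj by fastforce
  moreover have "cc i \<noteq> a" by (rule cc_ne)
  ultimately show ?thesis unfolding wform_def using k1 wcoef[of "cc i" 1] by auto
qed

lemma other_l: "\<exists>l<k. l \<noteq> i"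
proof (cases "i = 0")
  case True then show ?thesis using k2 by (intro exI[of _ 1]) auto
next
  case False then show ?thesis using k2 by (intro exI[of _ 0]) auto
qed

lemma psi_noncollinear:
  assumes J1: "\<iota> \<in> JU" and J2: "\<iota>' \<in> JU" and ne: "\<iota> \<noteq> \<iota>'"
  shows "\<not> collinear_int (4*k) (psi \<iota>) (psi \<iota>')"
proof -
  obtain tg i \<omega> where i1: "\<iota> = (tg, i, \<omega>)" by (cases \<iota>) auto
  obtain tg' i' \<omega>' where i2: "\<iota>' = (tg', i', \<omega>')" by (cases \<iota>') auto
  note m1 = J1[unfolded i1] and m2 = J2[unfolded i2]
  have sw: "\<not> collinear_int (4*k) (psi \<iota>') (psi \<iota>) \<Longrightarrow> ?thesis" using collinear_sym by blast
  have gen: "\<not> collinear_int (4*k) (psi \<kappa>) (psi \<kappa>')"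
    if "\<kappa> = (s, j, \<eta>)" "\<kappa>' = (s', j', \<eta>')" "\<kappa> \<in> JU" "\<kappa>' \<in> JU" "l < k" "l \<in> \<eta> \<longleftrightarrow> l \<notin> \<eta>'"
       "psi \<kappa> (pos \<eta> l) \<noteq> 0" "psi \<kappa>' (pos \<eta>' l) \<noteq> 0"
    for \<kappa> \<kappa>' s j \<eta> s' j' \<eta>' l
  proof (rule NC[where p="pos \<eta>' l" and q="pos \<eta> l"])
    show "pos \<eta>' l < 4*k" "pos \<eta> l < 4*k" using that pos_lt by auto
    have "pos \<eta>' l < 2*k" using pos_low that by auto
    then show "psi \<kappa> (pos \<eta>' l) = 0" using that by (simp add: psi_low vform_opp)
    show "psi \<kappa>' (pos \<eta>' l) \<noteq> 0" "psi \<kappa> (pos \<eta> l) \<noteq> 0" using that by auto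
  qed
  have Wvs: "\<not> collinear_int (4*k) (psi (s, j, \<eta>)) v"
    if "(s, j, \<eta>) \<in> JU" "s \<noteq> 0" "v (pos \<eta>' j) \<noteq> 0" for s j \<eta> \<eta>' v
  proof -
    have j: "j < k" "j \<notin> \<eta>" using that unfolding JU_def by auto
    obtain l where l: "l < k" "l \<noteq> j" using other_l by blast
    show ?thesis
    proof (rule NC[where p="pos \<eta>' j" and q="pos \<eta> l"])
      show "pos \<eta>' j < 4*k" "pos \<eta> l < 4*k" using pos_lt j l by auto
      have "pos \<eta>' j < 2*k" using pos_low j by auto
      then show "psi (s, j, \<eta>) (pos \<eta>' j) = 0" using that j
        by (simp add: psi_low vform_def pos_def ee_zero)
      have "pos \<eta> l < 2*k" using pos_low l by auto
      then show "psi (s, j, \<eta>) (pos \<eta> l) \<noteq> 0" using that l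
        by (simp add: psi_low vform_pos ee_cc_nz)
      show "v (pos \<eta>' j) \<noteq> 0" by fact
    qed
  qed
  have Pval: "psi (0, 0, \<eta>) (pos \<eta> l) \<noteq> 0" if "l < k" for \<eta> l
    using that pos_low[of l \<eta>] by (simp add: psi_low vform_pos dd_nz)
  have Wval: "psi (s, j, \<eta>) (pos \<eta> l) \<noteq> 0" if "s \<noteq> 0" "l < k" "l \<noteq> j" for s j \<eta> l
    using that pos_low[of l \<eta>] by (simp add: psi_low vform_pos ee_cc_nz)
  have symd: "\<exists>l<k. (l \<in> \<eta> \<longleftrightarrow> l \<notin> \<eta>')" if "\<eta> \<subseteq> {..<k}" "\<eta>' \<subseteq> {..<k}" "\<eta> \<noteq> \<eta>'" for \<eta> \<eta>'
    using that by blast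
  consider (A) "tg = 0" "tg' = 0" | (E) "tg = 0" "tg' \<noteq> 0" | (F) "tg \<noteq> 0" "tg' = 0"
    | (B) "tg \<noteq> 0" "tg' \<noteq> 0" "i \<noteq> i'" | (C) "tg \<noteq> 0" "tg' \<noteq> 0" "i = i'" "tg = tg'"
    | (D) "tg \<noteq> 0" "tg' \<noteq> 0" "i = i'" "tg \<noteq> tg'" by blast
  then show ?thesis
  proof cases
    case A
    then have "i = 0" "i' = 0" "\<omega> \<subseteq> {..<k}" "\<omega>' \<subseteq> {..<k}" using m1 m2 unfolding JU_def by auto
    then have "\<omega> \<noteq> \<omega>'" using ne A i1 i2 by auto
    then obtain l where l: "l < k" "l \<in> \<omega> \<longleftrightarrow> l \<notin> \<omega>'" using symd \<open>\<omega> \<subseteq> {..<k}\<close> \<open>\<omega>' \<subseteq> {..<k}\<close> by blast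
    show ?thesis unfolding i1 i2 using A \<open>i = 0\<close> \<open>i' = 0\<close>
      by (intro gen[OF refl refl _ _ l]) (use m1 m2 Pval l in auto)
  next
    case E
    then have "i = 0" using m1 unfolding JU_def by auto
    have "i' < k" using m2 E unfolding JU_def by auto
    have "\<not> collinear_int (4*k) (psi \<iota>') (psi \<iota>)"
      unfolding i1 i2 using E \<open>i = 0\<close> by (intro Wvs[OF m2 E(2), where \<eta>'="\<omega>"]) (use Pval \<open>i' < k\<close> in auto)
    then show ?thesis by (rule sw)
  next
    case F
    then have "i' = 0" using m2 unfolding JU_def by auto
    have "i < k" using m1 F unfolding JU_def by auto
    show ?thesis
      unfolding i1 i2 using F \<open>i' = 0\<close> by (intro Wvs[OF m1 F(1), where \<eta>'="\<omega>'"]) (use Pval \<open>i < k\<close> in auto)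
  next
    case B
    have "i < k" "i' < k" "i' \<notin> \<omega>'" using m1 m2 B unfolding JU_def by auto
    show ?thesis
      unfolding i1 i2 by (intro Wvs[OF m1 B(1), where \<eta>'="\<omega>'"]) (use Wval B \<open>i < k\<close> in auto)
  next
    case C
    have s: "\<omega> \<subseteq> {..<k}" "\<omega>' \<subseteq> {..<k}" "i \<notin> \<omega>" "i' \<notin> \<omega>'" "i < k"
      using m1 m2 C unfolding JU_def by auto
    then have "\<omega> \<noteq> \<omega>'" using ne C i1 i2 by auto
    then obtain l where l: "l < k" "l \<in> \<omega> \<longleftrightarrow> l \<notin> \<omega>'" using symd s by blast
    then have "l \<noteq> i" using s C by auto
    show ?thesis unfolding i1 i2
      by (intro gen[OF refl refl _ _ l]) (use m1 m2 Wval l C \<open>l \<noteq> i\<close> in auto)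
  next
    case D
    have s: "i < k" "tg \<in> {1,2,3}" "tg' \<in> {1,2,3}" "i \<notin> \<omega>" using m1 m2 D unfolding JU_def by auto
    obtain l where l: "l < k" "l \<noteq> i" using other_l by blast
    have k1: "1 < k" using k2 by simp
    have main: "\<not> collinear_int (4*k) (psi (t1, i, \<eta>)) (psi (t2, i, \<eta>2))"
      if "t1 \<in> {1,2,3}" "t2 \<in> {2,3}" "t1 \<noteq> t2" "i \<notin> \<eta>" for t1 t2 \<eta> \<eta>2
    proof -
      define B where "B = (if t2 = 2 then 2*k else 3*k)"
      show ?thesis
      proof (rule NC[where p="B + 1" and q="pos \<eta> l"])
        show "B + 1 < 4*k" "pos \<eta> l < 4*k" using k1 l pos_lt unfolding B_def by auto
        show "psi (t1, i, \<eta>) (B + 1) = 0" using that k1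
          by (auto simp: psi_def B_def vform_def wform_def)
        show "psi (t2, i, \<eta>2) (B + 1) \<noteq> 0" using that k1 wform_nz[OF s(1), of B]
          by (auto simp: psi_def B_def vform_def)
        show "psi (t1, i, \<eta>) (pos \<eta> l) \<noteq> 0" using Wval[of t1 l i \<eta>] that l by auto
      qed
    qed
    show ?thesis
    proof (cases "tg' \<in> {2,3}")
      case True
      then show ?thesis unfolding i1 i2 using main[of tg tg' \<omega> \<omega>'] s D by auto
    next
      case False
      then have "tg \<in> {2,3}" using s D by auto
      moreover have "i \<notin> \<omega>'" using m2 D unfolding JU_def by auto
      ultimately have "\<not> collinear_int (4*k) (psi \<iota>') (psi \<iota>)"
        unfolding i1 i2 using main[of tg' tg \<omega>' \<omega>] s D by auto
      then show ?thesis by (rule sw)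
    qed
  qed
qed

end


definition admissible :: "nat \<Rightarrow> nat \<Rightarrow> nat \<Rightarrow> 'i set \<Rightarrow> ('i \<Rightarrow> nat \<Rightarrow> int) \<Rightarrow> bool" where
  "admissible m0 t L J \<psi> \<longleftrightarrow> finite J \<and> card J \<le> m0 \<and> (\<forall>\<iota>\<in>J. \<forall>l<t. \<bar>\<psi> \<iota> l\<bar> \<le> int L)
     \<and> (\<forall>\<iota>\<in>J. \<exists>l<t. \<psi> \<iota> l \<noteq> 0) \<and> (\<forall>\<iota>\<in>J. \<forall>\<iota>'\<in>J. \<iota> \<noteq> \<iota>' \<longrightarrow> \<not> collinear_int t (\<psi> \<iota>) (\<psi> \<iota>'))"

lemma admissible_subset: "admissible m0 t L J \<psi> \<Longrightarrow> X \<subseteq> J \<Longrightarrow> admissible m0 t L X \<psi>"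
  unfolding admissible_def by (meson card_mono dual_order.trans finite_subset subsetD)

lemma avgV_sum: "finite S \<Longrightarrow> avgV N t (\<lambda>x. \<Sum>s\<in>S. f s x) = (\<Sum>s\<in>S. avgV N t (f s))"
  unfolding avgV_def by (simp add: sum.swap[of _ S] sum_divide_distrib)

lemma avgV_cmult: "avgV N t (\<lambda>x. c * f x) = c * avgV N t f"
  unfolding avgV_def by (simp add: sum_distrib_left)

lemma LF_sub:
  assumes lf: "linear_forms_condition m0 t L \<nu>" and e: "e > 0"
  shows "\<exists>N0. \<forall>N. prime N \<and> N \<ge> N0 \<longrightarrow> (\<forall>(J::'i set) \<psi>. admissible m0 t L J \<psi> \<longrightarrow>
     \<bar>avgV N t (\<lambda>x. \<Prod>\<iota>\<in>J. \<nu> N ((\<Sum>l<t. \<psi> \<iota> l * x l) mod int N)) - 1\<bar> \<le> e)"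
proof -
  obtain N0 where N0: "\<forall>N. prime N \<and> N \<ge> N0 \<longrightarrow>
        (\<forall>m b Lm. m \<le> m0 \<and>
            (\<forall>i<m. \<forall>j<t. \<bar>Lm i j\<bar> \<le> int L) \<and>
            (\<forall>i<m. \<exists>j<t. Lm i j \<noteq> 0) \<and>
            (\<forall>i<m. \<forall>i'<m. i \<noteq> i' \<longrightarrow> \<not> collinear_int t (Lm i) (Lm i'))
          \<longrightarrow>
            \<bar>(\<Sum>x\<in>ZN_vecs N t.
                 \<Prod>i<m. \<nu> N ((b i + (\<Sum>j<t. Lm i j * x j)) mod int N))
               / real (card (ZN_vecs N t)) - 1\<bar> \<le> e)"
    using lf e unfolding linear_forms_condition_def by blast
  show ?thesis
  proof (intro exI[of _ N0] allI impI)
    fix N :: nat and J :: "'i set" and \<psi>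
    assume N: "prime N \<and> N \<ge> N0" and adm: "admissible m0 t L J \<psi>"
    have fJ: "finite J" using adm unfolding admissible_def by auto
    obtain h where h: "bij_betw h {0..<card J} J" using ex_bij_betw_nat_finite[OF fJ] by blast
    define Lm where "Lm i = \<psi> (h i)" for i
    have hJ: "i < card J \<Longrightarrow> h i \<in> J" for i using h by (auto simp: bij_betw_def)
    have hinj: "i < card J \<Longrightarrow> i' < card J \<Longrightarrow> i \<noteq> i' \<Longrightarrow> h i \<noteq> h i'" for i i'
      using h by (auto simp: bij_betw_def inj_on_def)
    have cond: "card J \<le> m0 \<and>
            (\<forall>i<card J. \<forall>j<t. \<bar>Lm i j\<bar> \<le> int L) \<and>
            (\<forall>i<card J. \<exists>j<t. Lm i j \<noteq> 0) \<and>
            (\<forall>i<card J. \<forall>i'<card J. i \<noteq> i' \<longrightarrow> \<not> collinear_int t (Lm i) (Lm i'))"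
    proof (intro conjI allI impI)
      show "card J \<le> m0" using adm unfolding admissible_def by auto
      fix i assume i: "i < card J"
      show "\<exists>j<t. Lm i j \<noteq> 0" using adm hJ[OF i] unfolding admissible_def Lm_def by auto
      fix j assume "j < t"
      then show "\<bar>Lm i j\<bar> \<le> int L" using adm hJ[OF i] unfolding admissible_def Lm_def by auto
    next
      fix i i' assume "i < card J" "i' < card J" "i \<noteq> i'"
      then show "\<not> collinear_int t (Lm i) (Lm i')"
        using adm hJ hinj unfolding admissible_def Lm_def by blast
    qed
    have "\<bar>(\<Sum>x\<in>ZN_vecs N t. \<Prod>i<card J. \<nu> N (((\<lambda>_. 0) i + (\<Sum>j<t. Lm i j * x j)) mod int N))
               / real (card (ZN_vecs N t)) - 1\<bar> \<le> e"
      using N0[rule_format, of N "card J" Lm "\<lambda>_. 0"] N cond by simp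
    moreover have "(\<Prod>i<card J. \<nu> N (((\<lambda>_. 0) i + (\<Sum>j<t. Lm i j * x j)) mod int N))
        = (\<Prod>\<iota>\<in>J. \<nu> N ((\<Sum>l<t. \<psi> \<iota> l * x l) mod int N))" for x
      using prod.reindex_bij_betw[OF h, of "\<lambda>\<iota>. \<nu> N ((\<Sum>l<t. \<psi> \<iota> l * x l) mod int N)"]
      by (simp add: Lm_def lessThan_atLeast0)
    ultimately show "\<bar>avgV N t (\<lambda>x. \<Prod>\<iota>\<in>J. \<nu> N ((\<Sum>l<t. \<psi> \<iota> l * x l) mod int N)) - 1\<bar> \<le> e"
      unfolding avgV_def by (simp add: card_ZN_vecs)
  qed
qed

lemma LF_transfer:
  assumes lf: "linear_forms_condition m0 t L \<nu>" and e: "e > 0"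
  shows "\<exists>N0. \<forall>N. prime N \<and> N \<ge> N0 \<longrightarrow> (\<forall>(J::'i set) \<psi>. admissible m0 t L J \<psi> \<longrightarrow>
     \<bar>avgV N t (\<lambda>x. \<Prod>\<iota>\<in>J. (1 + \<nu> N ((\<Sum>l<t. \<psi> \<iota> l * x l) mod int N)) / 2) - 1\<bar> \<le> e)"
proof -
  obtain N0 where N0: "\<forall>N. prime N \<and> N \<ge> N0 \<longrightarrow> (\<forall>(J::'i set) \<psi>. admissible m0 t L J \<psi> \<longrightarrow>
     \<bar>avgV N t (\<lambda>x. \<Prod>\<iota>\<in>J. \<nu> N ((\<Sum>l<t. \<psi> \<iota> l * x l) mod int N)) - 1\<bar> \<le> e)"
    using LF_sub[OF lf e] by blast
  show ?thesis
  proof (intro exI[of _ N0] allI impI)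
    fix N :: nat and J :: "'i set" and \<psi>
    assume N: "prime N \<and> N \<ge> N0" and adm: "admissible m0 t L J \<psi>"
    have fJ: "finite J" using adm unfolding admissible_def by auto
    define a where "a \<iota> x = \<nu> N ((\<Sum>l<t. \<psi> \<iota> l * x l) mod int N)" for \<iota> x
    have sub: "\<bar>avgV N t (\<lambda>x. prod (\<lambda>\<iota>. a \<iota> x) X) - 1\<bar> \<le> e" if "X \<in> Pow J" for X
      using N0[rule_format, of N X \<psi>] N admissible_subset[OF adm, of X] that unfolding a_def by auto
    have pa: "(\<Prod>\<iota>\<in>J. (1 + a \<iota> x) / 2) = (\<Sum>X\<in>Pow J. prod (\<lambda>\<iota>. a \<iota> x) X) / 2 ^ card J" for x
    proof -
      have "(\<Prod>\<iota>\<in>J. (1 + a \<iota> x) / 2) = (\<Prod>\<iota>\<in>J. a \<iota> x + 1) / 2 ^ card J"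
        by (simp add: prod_dividef add.commute)
      also have "(\<Prod>\<iota>\<in>J. a \<iota> x + 1) = (\<Sum>X\<in>Pow J. prod (\<lambda>\<iota>. a \<iota> x) X * prod (\<lambda>_. 1) (J - X))"
        by (rule prod_add[OF fJ])
      finally show ?thesis by simp
    qed
    define S where "S = (\<Sum>X\<in>Pow J. avgV N t (\<lambda>x. prod (\<lambda>\<iota>. a \<iota> x) X))"
    define c where "c = (2::real) ^ card J"
    have c0: "c > 0" unfolding c_def by simp
    have eq: "avgV N t (\<lambda>x. \<Prod>\<iota>\<in>J. (1 + a \<iota> x) / 2) = S / c"
    proof -
      have "avgV N t (\<lambda>x. \<Prod>\<iota>\<in>J. (1 + a \<iota> x) / 2)
          = avgV N t (\<lambda>x. (1/c) * (\<Sum>X\<in>Pow J. prod (\<lambda>\<iota>. a \<iota> x) X))"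
        unfolding pa c_def by simp
      also have "\<dots> = (1/c) * avgV N t (\<lambda>x. \<Sum>X\<in>Pow J. prod (\<lambda>\<iota>. a \<iota> x) X)"
        by (rule avgV_cmult)
      also have "avgV N t (\<lambda>x. \<Sum>X\<in>Pow J. prod (\<lambda>\<iota>. a \<iota> x) X) = S"
        unfolding S_def using fJ by (intro avgV_sum) simp
      finally show ?thesis by simp
    qed
    have b: "\<bar>S - c\<bar> \<le> c * e"
    proof -
      have "S - c = (\<Sum>X\<in>Pow J. avgV N t (\<lambda>x. prod (\<lambda>\<iota>. a \<iota> x) X) - 1)"
        using fJ unfolding S_def c_def by (simp add: sum_subtractf card_Pow)
      also have "\<bar>\<dots>\<bar> \<le> (\<Sum>X\<in>Pow J. \<bar>avgV N t (\<lambda>x. prod (\<lambda>\<iota>. a \<iota> x) X) - 1\<bar>)" by (rule sum_abs)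
      also have "\<dots> \<le> (\<Sum>X\<in>Pow J. e)" using sub by (intro sum_mono) auto
      also have "\<dots> = c * e" using fJ unfolding c_def by (simp add: card_Pow)
      finally show ?thesis .
    qed
    have "S / c - 1 = (S - c) / c" using c0 by (simp add: field_simps)
    then have "\<bar>S / c - 1\<bar> = \<bar>S - c\<bar> / c" using c0 by simp
    also have "\<dots> \<le> e" using b c0 by (simp add: pos_divide_le_eq mult.commute)
    finally show "\<bar>avgV N t (\<lambda>x. \<Prod>\<iota>\<in>J. (1 + \<nu> N ((\<Sum>l<t. \<psi> \<iota> l * x l) mod int N)) / 2) - 1\<bar> \<le> e"
      using eq unfolding a_def by simp
  qed
qed


definition m0k :: "nat \<Rightarrow> nat" where "m0k k = (2*k+1) * 2^k"
definition Lk :: "nat \<Rightarrow> nat" where "Lk k = 2*k*k"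

context setting begin

definition LFd :: "real \<Rightarrow> bool" where
  "LFd \<delta> \<longleftrightarrow> (\<forall>J. J \<subseteq> JU \<longrightarrow> card J \<le> m0k k \<longrightarrow>
      \<bar>avgV N (4*k) (\<lambda>x. \<Prod>\<iota>\<in>J. nu ((\<Sum>l<4*k. psi \<iota> l * x l) mod int N)) - 1\<bar> \<le> \<delta>)"

lemma JU_finite: "finite JU"
proof -
  have "JU \<subseteq> {..3} \<times> {..<k+1} \<times> Pow {..<k}" unfolding JU_def by auto
  then show ?thesis by (rule finite_subset) auto
qed

lemma vform_bound: "\<forall>l<k. \<bar>e l\<bar> \<le> int k \<Longrightarrow> \<bar>vform e \<omega> p\<bar> \<le> int k"
  unfolding vform_def by auto

lemma vform_high: "2*k \<le> p \<Longrightarrow> vform e \<omega> p = 0" unfolding vform_def by auto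

lemma wform_bound:
  assumes "\<forall>l<k. \<bar>e l\<bar> \<le> int k" shows "\<bar>wform B e p\<bar> \<le> int (2*k*k)"
proof (cases "B < p \<and> p < B + k")
  case True
  then have q: "p - B < k" by auto
  have k0: "0 < k" using k2 by simp
  have "\<bar>dd 0 * e (p - B) - dd (p - B) * e 0\<bar> \<le> \<bar>dd 0\<bar> * \<bar>e (p - B)\<bar> + \<bar>dd (p - B)\<bar> * \<bar>e 0\<bar>"
    by (metis abs_mult abs_triangle_ineq4)
  also have "\<dots> \<le> int k * int k + int k * int k"
    using assms q k0 ee_bound[of 0 a] ee_bound[of "p - B" a] ak unfolding dd_def
    by (intro add_mono mult_mono) auto
  finally show ?thesis using True unfolding wform_def by simp
next
  case False then show ?thesis unfolding wform_def by auto
qed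

lemma psi_bound: "\<iota> \<in> JU \<Longrightarrow> \<bar>psi \<iota> p\<bar> \<le> int (2*k*k)"
proof -
  assume J: "\<iota> \<in> JU"
  obtain tg i \<omega> where i: "\<iota> = (tg, i, \<omega>)" by (cases \<iota>) auto
  have "k * 1 \<le> k * (2*k)" using k2 by (intro mult_le_mono2) simp
  then have kn: "k \<le> 2*k*k" by (simp add: mult.commute mult.left_commute)
  then have kk: "int k \<le> int (2*k*k)" using of_nat_le_iff by blast
  have ed: "\<forall>l<k. \<bar>dd l\<bar> \<le> int k" using ee_bound ak unfolding dd_def by auto
  show ?thesis
  proof (cases "tg = 0")
    case True
    then have "psi \<iota> p = vform dd \<omega> p" using i by (simp add: psi_def)
    then show ?thesis using vform_bound[OF ed, of \<omega> p] kk by linarith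
  next
    case False
    then have ik: "i < k" using J i unfolding JU_def by auto
    have ee: "\<forall>l<k. \<bar>ee (cc i) l\<bar> \<le> int k" using ee_bound cc_le[OF ik] by auto
    have v: "\<bar>vform (ee (cc i)) \<omega> p\<bar> \<le> int (2*k*k)" using vform_bound[OF ee, of \<omega> p] kk by linarith
    have w: "\<bar>vform (ee (cc i)) \<omega> p + wform B (ee (cc i)) p\<bar> \<le> int (2*k*k)" if "2*k \<le> B" for B
    proof (cases "p < 2*k")
      case True then show ?thesis using v that by (simp add: wform_low)
    next
      case False then show ?thesis using wform_bound[OF ee] by (simp add: vform_high)
    qed
    have "psi \<iota> p = vform (ee (cc i)) \<omega> p \<or> psi \<iota> p = vform (ee (cc i)) \<omega> p + wform (2*k) (ee (cc i)) p
       \<or> psi \<iota> p = vform (ee (cc i)) \<omega> p + wform (3*k) (ee (cc i)) p"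
      using False i by (simp add: psi_def)
    then show ?thesis using v w[of "2*k"] w[of "3*k"] by auto
  qed
qed

lemma psi_nonzero: "\<iota> \<in> JU \<Longrightarrow> \<exists>l<4*k. psi \<iota> l \<noteq> 0"
proof -
  assume J: "\<iota> \<in> JU"
  obtain tg i \<omega> where i: "\<iota> = (tg, i, \<omega>)" by (cases \<iota>) auto
  show ?thesis
  proof (cases "tg = 0")
    case True
    have k0: "0 < k" using k2 by simp
    have "psi \<iota> (pos \<omega> 0) \<noteq> 0" using True i pos_low[OF k0] k0 by (simp add: psi_low vform_pos dd_nz)
    then show ?thesis using pos_lt[OF k0] by blast
  next
    case False
    obtain l where l: "l < k" "l \<noteq> i" using other_l by blast
    have "psi \<iota> (pos \<omega> l) \<noteq> 0" using False i pos_low[OF l(1)] l by (simp add: psi_low vform_pos ee_cc_nz)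
    then show ?thesis using pos_lt[OF l(1)] by blast
  qed
qed

lemma admissible_JU: "J \<subseteq> JU \<Longrightarrow> card J \<le> m0k k \<Longrightarrow> admissible (m0k k) (4*k) (Lk k) J psi"
proof -
  assume J: "J \<subseteq> JU" and c: "card J \<le> m0k k"
  have "finite J" using finite_subset[OF J JU_finite] .
  moreover have "\<forall>\<iota>\<in>J. \<forall>l<4*k. \<bar>psi \<iota> l\<bar> \<le> int (2*k*k)" using J psi_bound by blast
  moreover have "\<forall>\<iota>\<in>J. \<exists>l<4*k. psi \<iota> l \<noteq> 0" using J psi_nonzero by blast
  moreover have "\<forall>\<iota>\<in>J. \<forall>\<iota>'\<in>J. \<iota> \<noteq> \<iota>' \<longrightarrow> \<not> collinear_int (4*k) (psi \<iota>) (psi \<iota>')"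
    using J psi_noncollinear by blast
  ultimately show ?thesis unfolding admissible_def Lk_def using c by blast
qed

lemma prod_psi_vform:
  "nu ((\<Sum>l<4*k. vform e \<omega> l * x l) mod int N) = nu (phi e (vx k \<omega> x) mod int N)"
  by (simp add: phi_vx)

lemma Anorm_bound:
  assumes LF: "LFd \<delta>" and D: "D \<subseteq> {..<k}" and i: "i < k" "i \<notin> D"
  shows "Anorm D i \<le> 1 + \<delta>"
proof -
  define J where "J = (\<lambda>\<omega>. (1::nat, i, \<omega>)) ` Pow D"
  have JJ: "J \<subseteq> JU" unfolding J_def JU_def using D i by auto
  have fD: "finite D" using finite_subset[OF D] by blast
  have cJ: "card J \<le> m0k k"
  proof -
    have "card J \<le> card (Pow D)" unfolding J_def by (rule card_image_le) (simp add: fD)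
    also have "\<dots> = 2 ^ card D" using fD by (simp add: card_Pow)
    also have "\<dots> \<le> 2 ^ k" using card_mono[OF _ D] by (intro power_increasing) auto
    also have "\<dots> \<le> m0k k" unfolding m0k_def by simp
    finally show ?thesis .
  qed
  have inj: "inj_on (\<lambda>\<omega>. (1::nat, i, \<omega>)) (Pow D)" by (auto simp: inj_on_def)
  have "(\<Prod>\<iota>\<in>J. nu ((\<Sum>l<4*k. psi \<iota> l * x l) mod int N)) = (\<Prod>\<omega>\<in>Pow D. VV i (vx k \<omega> x))" for x
    unfolding J_def prod.reindex[OF inj] by (simp add: psi_def VV_def phi_vx)
  then have "Anorm D i = avgV N (4*k) (\<lambda>x. \<Prod>\<iota>\<in>J. nu ((\<Sum>l<4*k. psi \<iota> l * x l) mod int N))"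
    unfolding Anorm_def by simp
  then show ?thesis using LF[unfolded LFd_def, rule_format, OF JJ cJ] by linarith
qed

end


context setting begin

definition JP :: "(nat \<times> nat \<times> nat set) set" where "JP = (\<lambda>\<omega>. (0, 0, \<omega>)) ` Pow {..<k}"
definition JW :: "nat \<Rightarrow> (nat \<times> nat \<times> nat set) set" where
  "JW t = (\<lambda>(\<omega>, i). (t, i, \<omega>)) ` (SIGMA \<omega>:Pow {..<k}. {..<k} - \<omega>)"

lemma JP_sub: "JP \<subseteq> JU" unfolding JP_def JU_def by auto
lemma JW_sub: "t \<in> {1,2,3} \<Longrightarrow> JW t \<subseteq> JU" unfolding JW_def JU_def by auto
lemma JP_fin: "finite JP" unfolding JP_def by simp
lemma JW_fin: "finite (JW t)" unfolding JW_def by (intro finite_imageI finite_SigmaI) auto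
lemma JP_card: "card JP \<le> 2^k"
  unfolding JP_def by (rule order_trans[OF card_image_le]) (simp_all add: card_Pow)
lemma JW_card: "card (JW t) \<le> 2^k * k"
proof -
  have "card (JW t) \<le> card (SIGMA \<omega>:Pow {..<k}. {..<k} - \<omega>)" unfolding JW_def
    by (rule card_image_le) (auto intro: finite_SigmaI)
  also have "\<dots> \<le> card (Pow {..<k} \<times> {..<k})" by (intro card_mono) auto
  also have "\<dots> = 2^k * k" by (simp add: card_cartesian_product card_Pow)
  finally show ?thesis .
qed
lemma JP_JW_disj: "t \<noteq> 0 \<Longrightarrow> JP \<inter> JW t = {}" unfolding JP_def JW_def by auto
lemma JW_JW_disj: "t \<noteq> t' \<Longrightarrow> JW t \<inter> JW t' = {}" unfolding JW_def by auto

abbreviation "nuf \<iota> x \<equiv> nu ((\<Sum>l<4*k. psi \<iota> l * x l) mod int N)"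

lemma prod_JP: "(\<Prod>\<iota>\<in>JP. nuf \<iota> x) = PP x"
proof -
  have inj: "inj_on (\<lambda>\<omega>. (0::nat, 0::nat, \<omega>)) (Pow {..<k})" by (auto simp: inj_on_def)
  show ?thesis unfolding JP_def prod.reindex[OF inj] PP_def by (simp add: psi_def phi_vx)
qed

lemma prod_JW:
  assumes "t = 2 \<and> B = 2*k \<or> t = 3 \<and> B = 3*k"
  shows "(\<Prod>\<iota>\<in>JW t. nuf \<iota> x) = WW (shB B x)"
proof -
  have inj: "inj_on (\<lambda>(\<omega>, i). (t, i, \<omega>)) (SIGMA \<omega>:Pow {..<k}. {..<k} - \<omega>)" by (auto simp: inj_on_def)
  have BB: "B + k \<le> 4*k" using assms by auto
  have psiv: "psi (t, i, \<omega>) = (\<lambda>p. vform (ee (cc i)) \<omega> p + wform B (ee (cc i)) p)" for i \<omega>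
    using assms by (auto simp: psi_def)
  have "(\<Prod>\<iota>\<in>JW t. nuf \<iota> x) = (\<Prod>(\<omega>, i)\<in>(SIGMA \<omega>:Pow {..<k}. {..<k} - \<omega>). nuf (t, i, \<omega>) x)"
    unfolding JW_def prod.reindex[OF inj] by (simp add: case_prod_beta comp_def)
  also have "\<dots> = (\<Prod>\<omega>\<in>Pow {..<k}. \<Prod>i\<in>{..<k} - \<omega>. nuf (t, i, \<omega>) x)"
    by (rule prod.Sigma[symmetric]) auto
  also have "\<dots> = WW (shB B x)"
    unfolding WW_def VV_def
    by (intro prod.cong refl) (simp add: psiv phi_vx_shB[OF BB])
  finally show ?thesis .
qed

lemma LF_bounds:
  assumes LF: "LFd \<delta>"
  shows "\<bar>avgV N (4*k) PP - 1\<bar> \<le> \<delta>"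
    and "\<bar>avgV N (4*k) (\<lambda>x. PP x * WW (shB (2*k) x)) - 1\<bar> \<le> \<delta>"
    and "\<bar>avgV N (4*k) (\<lambda>x. PP x * WW (shB (3*k) x)) - 1\<bar> \<le> \<delta>"
    and "\<bar>avgV N (4*k) (\<lambda>x. PP x * WW (shB (2*k) x) * WW (shB (3*k) x)) - 1\<bar> \<le> \<delta>"
proof -
  have m: "2^k + 2^k * k + 2^k * k \<le> m0k k" unfolding m0k_def by (simp add: algebra_simps)
  note L = LF[unfolded LFd_def, rule_format]
  have c1: "card JP \<le> m0k k" using JP_card m by linarith
  show "\<bar>avgV N (4*k) PP - 1\<bar> \<le> \<delta>" using L[OF JP_sub c1] by (simp add: prod_JP)
  have c2: "card (JP \<union> JW t) \<le> m0k k" for t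
    using card_Un_le[of JP "JW t"] JP_card JW_card[of t] m by linarith
  have s2: "JP \<union> JW t \<subseteq> JU" if "t \<in> {1,2,3}" for t using JP_sub JW_sub[OF that] by auto
  have pu: "(\<Prod>\<iota>\<in>JP \<union> JW t. nuf \<iota> x) = (\<Prod>\<iota>\<in>JP. nuf \<iota> x) * (\<Prod>\<iota>\<in>JW t. nuf \<iota> x)" if "t \<noteq> 0" for t x
    using JP_JW_disj[OF that] JP_fin JW_fin by (intro prod.union_disjoint) auto
  show "\<bar>avgV N (4*k) (\<lambda>x. PP x * WW (shB (2*k) x)) - 1\<bar> \<le> \<delta>"
    using L[OF s2[of 2] c2[of 2]] by (simp add: pu prod_JP prod_JW)
  show "\<bar>avgV N (4*k) (\<lambda>x. PP x * WW (shB (3*k) x)) - 1\<bar> \<le> \<delta>"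
    using L[OF s2[of 3] c2[of 3]] by (simp add: pu prod_JP prod_JW)
  have c3: "card (JP \<union> JW 2 \<union> JW 3) \<le> m0k k"
    using card_Un_le[of "JP \<union> JW 2" "JW 3"] card_Un_le[of JP "JW 2"] JP_card JW_card[of 2] JW_card[of 3] m
    by linarith
  have s3: "JP \<union> JW 2 \<union> JW 3 \<subseteq> JU" using JP_sub JW_sub[of 2] JW_sub[of 3] by auto
  have pu3: "(\<Prod>\<iota>\<in>JP \<union> JW 2 \<union> JW 3. nuf \<iota> x) = (\<Prod>\<iota>\<in>JP \<union> JW 2. nuf \<iota> x) * (\<Prod>\<iota>\<in>JW 3. nuf \<iota> x)" for x
    using JP_JW_disj[of 3] JW_JW_disj[of 2 3] JP_fin JW_fin by (intro prod.union_disjoint) auto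
  show "\<bar>avgV N (4*k) (\<lambda>x. PP x * WW (shB (2*k) x) * WW (shB (3*k) x)) - 1\<bar> \<le> \<delta>"
    using L[OF s3 c3] by (simp add: pu3 pu prod_JP prod_JW)
qed

end


lemma sum_PiE_insert:
  assumes "i \<notin> I"
  shows "(\<Sum>x\<in>PiE (insert i I) (\<lambda>_. Z). F x) = (\<Sum>a\<in>Z. \<Sum>y\<in>PiE I (\<lambda>_. Z). F (y(i := a)))"
proof -
  have "(\<Sum>x\<in>PiE (insert i I) (\<lambda>_. Z). F x) = (\<Sum>x\<in>(\<lambda>(y, g). g(i := y)) ` (Z \<times> PiE I (\<lambda>_. Z)). F x)"
    by (simp add: PiE_insert_eq)
  also have "\<dots> = (\<Sum>p\<in>Z \<times> PiE I (\<lambda>_. Z). F ((\<lambda>(y, g). g(i := y)) p))"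
    by (rule sum.reindex[OF inj_combinator[OF assms], unfolded comp_def])
  also have "\<dots> = (\<Sum>(a, y)\<in>Z \<times> PiE I (\<lambda>_. Z). F (y(i := a)))"
    by (intro sum.cong refl) auto
  also have "\<dots> = (\<Sum>a\<in>Z. \<Sum>y\<in>PiE I (\<lambda>_. Z). F (y(i := a)))"
    by (simp only: sum.cartesian_product)
  finally show ?thesis .
qed

lemma sum_two_coords:
  fixes Q :: "int \<Rightarrow> int \<Rightarrow> real"
  assumes "i < t" "j < t" "i \<noteq> j"
  shows "(\<Sum>x\<in>ZN_vecs N t. Q (x i) (x j)) = real N ^ (t - 2) * (\<Sum>a\<in>ZN N. \<Sum>b\<in>ZN N. Q a b)"
proof -
  define I0 where "I0 = {0..<t} - {i, j}"
  have eq: "{0..<t} = insert i (insert j I0)" using assms unfolding I0_def by auto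
  have n1: "i \<notin> insert j I0" "j \<notin> I0" using assms unfolding I0_def by auto
  have cI0: "card I0 = t - 2" unfolding I0_def using assms by (simp add: card_Diff_subset)
  have "(\<Sum>x\<in>ZN_vecs N t. Q (x i) (x j))
      = (\<Sum>a\<in>ZN N. \<Sum>y\<in>PiE (insert j I0) (\<lambda>_. ZN N). Q a (y j))"
    unfolding ZN_vecs_def eq sum_PiE_insert[OF n1(1)] using assms by simp
  also have "\<dots> = (\<Sum>a\<in>ZN N. \<Sum>b\<in>ZN N. \<Sum>y\<in>PiE I0 (\<lambda>_. ZN N). Q a b)"
    unfolding sum_PiE_insert[OF n1(2)] by simp
  also have "\<dots> = (\<Sum>a\<in>ZN N. \<Sum>b\<in>ZN N. real N ^ (t - 2) * Q a b)"
  proof -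
    have "finite I0" unfolding I0_def by simp
    then show ?thesis by (simp add: card_PiE card_ZN cI0)
  qed
  finally show ?thesis by (simp add: sum_distrib_left)
qed

context setting begin

definition Lam :: real where
  "Lam = (\<Sum>x\<in>ZN N. \<Sum>s\<in>ZN N. \<Prod>j\<le>k. g j ((x + int j * s) mod int N)) / real (card (ZN N \<times> ZN N))"

definition QQ :: "int \<Rightarrow> int \<Rightarrow> real" where
  "QQ X S = (\<Prod>j\<le>k. g j ((X + int j * S) mod int N))"

lemma cc_image: "cc ` {..<k} = {..k} - {a}"
proof
  show "cc ` {..<k} \<subseteq> {..k} - {a}" using cc_le cc_ne by auto
  show "{..k} - {a} \<subseteq> cc ` {..<k}"
  proof
    fix j assume j: "j \<in> {..k} - {a}"
    show "j \<in> cc ` {..<k}"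
    proof (cases "j < a")
      case True then have "cc j = j" "j < k" using ak by (auto simp: cc_def)
      then show ?thesis by (metis image_eqI lessThan_iff)
    next
      case False then have "j > a" using j by auto
      then have "cc (j - 1) = j" "j - 1 < k" using j by (auto simp: cc_def)
      then show ?thesis by (metis image_eqI lessThan_iff)
    qed
  qed
qed

lemma prod_reindex_cc: "(\<Prod>j\<le>k. h j) = h a * (\<Prod>l<k. h (cc l))"
proof -
  have "{..k} = insert a (cc ` {..<k})" using cc_image ak by auto
  moreover have "a \<notin> cc ` {..<k}" using cc_ne by (metis imageE)
  moreover have "inj_on cc {..<k}" using cc_inj by (auto simp: inj_on_def)
  ultimately show ?thesis by (simp add: prod.reindex)
qed

definition Xf :: "(nat \<Rightarrow> int) \<Rightarrow> int" where "Xf x = (\<Sum>l<k. int (cc l) * x (k + l))"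
definition Sf :: "(nat \<Rightarrow> int) \<Rightarrow> int" where "Sf x = - (\<Sum>l<k. x (k + l))"

lemma trm_empty: "(\<Prod>\<omega>\<in>Pow {}. trm {} \<omega> x) = QQ (Xf x mod int N) (Sf x mod int N)"
proof -
  have m: "((X mod int N) + int j * (S mod int N)) mod int N = (X + int j * S) mod int N" for X S j
    by (metis mod_add_left_eq mod_add_right_eq mod_mult_right_eq)
  have lin: "Xf x + int j * Sf x = phi (ee j) (vx k {} x)" for j
    unfolding Xf_def Sf_def phi_def ee_def vx_def
    by (simp add: sum_distrib_left sum_subtractf[symmetric] algebra_simps)
  have "QQ (Xf x mod int N) (Sf x mod int N) = (\<Prod>j\<le>k. g j (phi (ee j) (vx k {} x) mod int N))"
    unfolding QQ_def m lin ..
  also have "\<dots> = g a (phi (ee a) (vx k {} x) mod int N) * (\<Prod>l<k. g (cc l) (phi (ee (cc l)) (vx k {} x) mod int N))"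
    by (rule prod_reindex_cc)
  also have "\<dots> = trm {} {} x" unfolding trm_def G0_def GG_def dd_def by simp
  finally show ?thesis by simp
qed

lemma kN: "k < N"
proof -
  have "k * 1 \<le> k * (2*k)" using k2 by (intro mult_le_mono2) simp
  then have "k \<le> 2*k*k" by (simp add: mult.commute mult.left_commute)
  then show ?thesis using Nbig by linarith
qed

lemma sum_split01: "2 \<le> k \<Longrightarrow> (\<Sum>l<k. f l) = f 0 + f 1 + (\<Sum>l\<in>{2..<k}. f l)" for f :: "nat \<Rightarrow> int"
proof -
  assume "2 \<le> k"
  then have "{..<k} = insert 0 (insert 1 {2..<k})" by auto
  then show ?thesis by simp
qed

lemma ZN_dvd_eq: "int N dvd (p - q) \<Longrightarrow> p \<in> ZN N \<Longrightarrow> q \<in> ZN N \<Longrightarrow> p = q"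
  by (metis ZN_mod mod_eq_dvd_iff)

lemma Xf_split: "Xf x = int (cc 0) * x k + int (cc 1) * x (k+1) + (\<Sum>l\<in>{2..<k}. int (cc l) * x (k + l))"
  unfolding Xf_def using sum_split01[OF k2, of "\<lambda>l. int (cc l) * x (k + l)"] by simp

lemma Sf_split: "Sf x = - (x k + x (k+1) + (\<Sum>l\<in>{2..<k}. x (k + l)))"
  unfolding Sf_def using sum_split01[OF k2, of "\<lambda>l. x (k + l)"] by simp

lemma reparam_bij:
  defines "\<tau> \<equiv> (\<lambda>x. x(k := Xf x mod int N, k+1 := Sf x mod int N))"
  shows "\<And>x. x \<in> ZN_vecs N (4*k) \<Longrightarrow> \<tau> x \<in> ZN_vecs N (4*k)" and "inj_on \<tau> (ZN_vecs N (4*k))"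
proof -
  show "\<tau> x \<in> ZN_vecs N (4*k)" if "x \<in> ZN_vecs N (4*k)" for x
    using that k2 N0 unfolding \<tau>_def ZN_vecs_def PiE_def Pi_def extensional_def by (auto intro: mod_in_ZN)
  show "inj_on \<tau> (ZN_vecs N (4*k))"
  proof (rule inj_onI)
    fix x y assume x: "x \<in> ZN_vecs N (4*k)" and y: "y \<in> ZN_vecs N (4*k)" and e: "\<tau> x = \<tau> y"
    have oth: "x l = y l" if "l \<noteq> k" "l \<noteq> k+1" for l using fun_cong[OF e, of l] that by (simp add: \<tau>_def)
    have eX: "Xf x mod int N = Xf y mod int N" using fun_cong[OF e, of k] by (simp add: \<tau>_def)
    have eS: "Sf x mod int N = Sf y mod int N" using fun_cong[OF e, of "k+1"] by (simp add: \<tau>_def)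
    define R where "R = (\<Sum>l\<in>{2..<k}. int (cc l) * x (k + l))"
    define R' where "R' = (\<Sum>l\<in>{2..<k}. x (k + l))"
    have Ry: "R = (\<Sum>l\<in>{2..<k}. int (cc l) * y (k + l))" "R' = (\<Sum>l\<in>{2..<k}. y (k + l))"
      unfolding R_def R'_def using oth by (auto intro!: sum.cong)
    have Xx: "Xf x = int (cc 0) * x k + int (cc 1) * x (k+1) + R"
      unfolding R_def by (rule Xf_split)
    have Xy: "Xf y = int (cc 0) * y k + int (cc 1) * y (k+1) + R"
      unfolding Ry(1) by (rule Xf_split)
    have Sx: "Sf x = - (x k + x (k+1) + R')"
      unfolding R'_def by (rule Sf_split)
    have Sy: "Sf y = - (y k + y (k+1) + R')"
      unfolding Ry(2) by (rule Sf_split)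
    define u where "u = x k - y k"
    define v where "v = x (k+1) - y (k+1)"
    have d1: "int N dvd (int (cc 0) * u + int (cc 1) * v)"
      using eX unfolding Xx Xy u_def v_def by (simp add: mod_eq_dvd_iff algebra_simps)
    have "int N dvd (Sf x - Sf y)" using eS by (simp add: mod_eq_dvd_iff)
    moreover have "Sf x - Sf y = - (u + v)" unfolding Sx Sy u_def v_def by simp
    ultimately have "int N dvd - (u + v)" by simp
    then have d2: "int N dvd (u + v)" by (simp only: dvd_minus_iff)
    have "int N dvd ((int (cc 0) * u + int (cc 1) * v) - int (cc 1) * (u + v))"
      using d1 d2 by (intro dvd_diff) auto
    then have d3: "int N dvd ((int (cc 0) - int (cc 1)) * u)" by (simp add: algebra_simps)
    have ndiv: "\<not> int N dvd (int (cc 0) - int (cc 1))"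
    proof
      assume dv: "int N dvd (int (cc 0) - int (cc 1))"
      have ne: "int (cc 0) - int (cc 1) \<noteq> 0" using cc_inj by fastforce
      have "\<bar>int (cc 0) - int (cc 1)\<bar> \<le> int k" using cc_le[of 0] cc_le[of 1] k2 by auto
      moreover have "int k < int N" using kN by simp
      moreover have "\<bar>int N\<bar> \<le> \<bar>int (cc 0) - int (cc 1)\<bar>" using dvd_imp_le_int[OF ne dv] .
      ultimately show False by linarith
    qed
    have "prime (int N)" using prime by simp
    then have "int N dvd u" using d3 ndiv prime_dvd_mult_iff by blast
    moreover have "x k \<in> ZN N" "y k \<in> ZN N" using x y k2 unfolding ZN_vecs_def by (auto simp: PiE_iff)
    ultimately have xk: "x k = y k" unfolding u_def using ZN_dvd_eq by blast
    then have "int N dvd v" using d2 unfolding u_def by simp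
    moreover have "x (k+1) \<in> ZN N" "y (k+1) \<in> ZN N" using x y k2 unfolding ZN_vecs_def by (auto simp: PiE_iff)
    ultimately have xk1: "x (k+1) = y (k+1)" unfolding v_def using ZN_dvd_eq by blast
    show "x = y"
    proof
      fix l show "x l = y l" using oth[of l] xk xk1 by (cases "l = k \<or> l = k+1") auto
    qed
  qed
qed

lemma Lam_Tst: "Lam = Tst {}"
proof -
  have "Tst {} = avgV N (4*k) (\<lambda>x. QQ (Xf x mod int N) (Sf x mod int N))"
    unfolding Tst_def trm_empty ..
  also have "\<dots> = avgV N (4*k) (\<lambda>x. QQ (x k) (x (k+1)))"
    using avgV_bij[OF reparam_bij, of "\<lambda>x. QQ (x k) (x (k+1))"] k2 by simp
  also have "\<dots> = (\<Sum>a\<in>ZN N. \<Sum>b\<in>ZN N. QQ a b) / real (N^2)"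
  proof -
    have "4*k = (4*k - 2) + 2" using k2 by arith
    then have "real (N ^ (4*k)) = real N ^ (4*k - 2) * real N ^ 2"
      by (metis of_nat_power power_add)
    then show ?thesis unfolding avgV_def using sum_two_coords[where i=k and t="4*k" and j="k+1" and N=N and Q=QQ] k2 N0 by simp
  qed
  also have "\<dots> = Lam" unfolding Lam_def QQ_def by (simp add: card_ZN card_cartesian_product power2_eq_square)
  finally show ?thesis by simp
qed

end


lemma restrict_PiE_id: "y \<in> PiE A (\<lambda>_. Z) \<Longrightarrow> restrict y A = y"
  by (simp add: PiE_iff extensional_restrict)

lemma sum_restrict:
  assumes "finite B" "A \<inter> B = {}" "finite Z"
  shows "(\<Sum>y\<in>PiE (A \<union> B) (\<lambda>_. Z). F (restrict y A)) = real (card Z) ^ card B * (\<Sum>t\<in>PiE A (\<lambda>_. Z). F t)"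
  using assms
proof (induction B rule: finite_induct)
  case empty
  then show ?case by (simp add: restrict_PiE_id cong: sum.cong)
next
  case (insert b B)
  have bA: "b \<notin> A \<union> B" using insert by auto
  have "(\<Sum>y\<in>PiE (A \<union> insert b B) (\<lambda>_. Z). F (restrict y A))
      = (\<Sum>c\<in>Z. \<Sum>y\<in>PiE (A \<union> B) (\<lambda>_. Z). F (restrict (y(b := c)) A))"
    using sum_PiE_insert[OF bA, where Z=Z and F="\<lambda>y. F (restrict y A)"] by simp
  also have "\<dots> = (\<Sum>c\<in>Z. \<Sum>y\<in>PiE (A \<union> B) (\<lambda>_. Z). F (restrict y A))"
    using bA by (intro sum.cong refl) (auto simp: restrict_def intro!: arg_cong[where f=F])
  also have "\<dots> = real (card Z) * (real (card Z) ^ card B * (\<Sum>t\<in>PiE A (\<lambda>_. Z). F t))"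
  proof -
    have IH: "(\<Sum>y\<in>PiE (A \<union> B) (\<lambda>_. Z). F (restrict y A)) = real (card Z) ^ card B * (\<Sum>t\<in>PiE A (\<lambda>_. Z). F t)"
      using insert.IH insert.prems by blast
    show ?thesis unfolding IH by simp
  qed
  finally have fin: "(\<Sum>y\<in>PiE (A \<union> insert b B) (\<lambda>_. Z). F (restrict y A))
      = real (card Z) * (real (card Z) ^ card B * (\<Sum>t\<in>PiE A (\<lambda>_. Z). F t))" .
  have "card (insert b B) = Suc (card B)" using insert(1,2) by simp
  then show ?case unfolding fin by (simp only: power_Suc mult.assoc)
qed

lemma mod_add_sum: "((A mod m) + (\<Sum>l\<in>S. f l mod m)) mod m = (A + (\<Sum>l\<in>S. f l)) mod (m::int)"
proof -
  have "((A mod m) + (\<Sum>l\<in>S. f l mod m)) mod m = (A + (\<Sum>l\<in>S. f l mod m)) mod m"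
    by (rule mod_add_left_eq)
  also have "\<dots> = (A + (\<Sum>l\<in>S. f l mod m) mod m) mod m" by (rule mod_add_right_eq[symmetric])
  also have "(\<Sum>l\<in>S. f l mod m) mod m = (\<Sum>l\<in>S. f l) mod m" by (rule mod_sum_eq)
  also have "(A + (\<Sum>l\<in>S. f l) mod m) mod m = (A + (\<Sum>l\<in>S. f l)) mod m" by (rule mod_add_right_eq)
  finally show ?thesis .
qed

lemma ZN_finite: "finite (ZN N)" by (simp add: ZN_def)

context setting begin

definition GA :: "(int \<Rightarrow> real) \<Rightarrow> real" where
  "GA h = (\<Sum>x\<in>ZN N. \<Sum>t\<in>ZN_vecs N k. \<Prod>S\<in>Pow {0..<k}. h ((x + (\<Sum>i\<in>S. t i)) mod int N))
       / real (card (ZN N \<times> ZN_vecs N k))"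

lemma gowers_GA: "gowers_norm N k h = root (2^k) (GA h)"
  unfolding gowers_norm_def GA_def ..

lemma dd_ndvd: "l < k \<Longrightarrow> \<not> int N dvd dd l"
proof
  assume l: "l < k" and dv: "int N dvd dd l"
  have "\<bar>int N\<bar> \<le> \<bar>dd l\<bar>" using dvd_imp_le_int[OF dd_nz dv] .
  moreover have "\<bar>dd l\<bar> \<le> int k" using ee_bound[OF l ak] unfolding dd_def .
  ultimately show False using kN by linarith
qed

definition tauG :: "(nat \<Rightarrow> int) \<Rightarrow> nat \<Rightarrow> int" where
  "tauG x l = (if l < k then (dd l * x l + (- dd l * x (k + l))) mod int N
               else if l = k then (dd 0 * x k + (\<Sum>r\<in>{1..<k}. dd r * x (k + r))) mod int N
               else x l)"

lemma tauG_in: "x \<in> ZN_vecs N (4*k) \<Longrightarrow> tauG x \<in> ZN_vecs N (4*k)"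
  unfolding ZN_vecs_def PiE_iff tauG_def extensional_def using N0 k2 by (auto intro: mod_in_ZN)

lemma tauG_inj: "inj_on tauG (ZN_vecs N (4*k))"
proof (rule inj_onI)
  fix x y assume x: "x \<in> ZN_vecs N (4*k)" and y: "y \<in> ZN_vecs N (4*k)" and e: "tauG x = tauG y"
  have mem: "x l \<in> ZN N" "y l \<in> ZN N" if "l < 4*k" for l using x y that unfolding ZN_vecs_def by (auto simp: PiE_iff)
  have hi: "x l = y l" if "l > k" for l using fun_cong[OF e, of l] that by (simp add: tauG_def)
  have s: "(\<Sum>r\<in>{1..<k}. dd r * x (k + r)) = (\<Sum>r\<in>{1..<k}. dd r * y (k + r))"
    by (intro sum.cong refl) (simp add: hi)
  have "(dd 0 * x k + (\<Sum>r\<in>{1..<k}. dd r * y (k + r))) mod int N = (dd 0 * y k + (\<Sum>r\<in>{1..<k}. dd r * y (k + r))) mod int N"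
    using fun_cong[OF e, of k] s by (simp add: tauG_def)
  note eqk = this
  have k0: "0 < k" and kk: "k < 4*k" using k2 by auto
  have xk: "x k = y k" by (rule mod_dil_inj[OF prime dd_ndvd[OF k0] mem(1)[OF kk] mem(2)[OF kk] eqk])
  have lo: "x l = y l" if "l < k" for l
  proof -
    have xkl: "x (k + l) = y (k + l)" using xk hi[of "k+l"] by (cases "l = 0") auto
    have "(dd l * x l + (- dd l * x (k + l))) mod int N = (dd l * y l + (- dd l * y (k + l))) mod int N"
      using fun_cong[OF e, of l] that by (simp add: tauG_def)
    then have eql: "(dd l * x l + (- dd l * y (k + l))) mod int N = (dd l * y l + (- dd l * y (k + l))) mod int N"
      unfolding xkl .
    have lk: "l < 4*k" using that by simp
    show ?thesis by (rule mod_dil_inj[OF prime dd_ndvd[OF that] mem(1)[OF lk] mem(2)[OF lk] eql])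
  qed
  show "x = y"
  proof
    fix l show "x l = y l"
    proof (cases "l < k")
      case True then show ?thesis by (rule lo)
    next
      case False then show ?thesis using xk hi by (cases "l = k") auto
    qed
  qed
qed

definition HG :: "(nat \<Rightarrow> int) \<Rightarrow> real" where
  "HG x = (\<Prod>\<omega>\<in>Pow {..<k}. g a ((x k + (\<Sum>l\<in>\<omega>. x l)) mod int N))"

lemma HG_tauG: "HG (tauG x) = FF x"
  unfolding HG_def FF_def G0_def
proof (intro prod.cong refl)
  fix \<omega> assume \<omega>: "\<omega> \<in> Pow {..<k}"
  have fo: "finite \<omega>" using \<omega> finite_subset by auto
  have "(tauG x k + (\<Sum>l\<in>\<omega>. tauG x l)) mod int N
      = ((\<Sum>l<k. dd l * x (k + l)) + (\<Sum>l\<in>\<omega>. dd l * x l - dd l * x (k + l))) mod int N"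
  proof -
    have "(\<Sum>l\<in>\<omega>. tauG x l) = (\<Sum>l\<in>\<omega>. (dd l * x l - dd l * x (k + l)) mod int N)"
      using \<omega> by (intro sum.cong refl) (auto simp: tauG_def)
    moreover have "tauG x k = (\<Sum>l<k. dd l * x (k + l)) mod int N"
    proof -
      have "{..<k} = insert 0 {1..<k}" using k2 by auto
      then have "(\<Sum>l<k. dd l * x (k + l)) = dd 0 * x k + (\<Sum>r\<in>{1..<k}. dd r * x (k + r))" by simp
      then show ?thesis by (simp add: tauG_def)
    qed
    ultimately show ?thesis by (simp only: mod_add_sum)
  qed
  also have "(\<Sum>l<k. dd l * x (k + l)) + (\<Sum>l\<in>\<omega>. dd l * x l - dd l * x (k + l)) = phi dd (vx k \<omega> x)"
  proof -
    have sk: "{..<k} = \<omega> \<union> ({..<k} - \<omega>)" using \<omega> by auto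
    have "(\<Sum>l<k. dd l * x (k + l)) = (\<Sum>l\<in>\<omega>. dd l * x (k + l)) + (\<Sum>l\<in>{..<k} - \<omega>. dd l * x (k + l))"
      using \<omega> by (subst sk) (rule sum.union_disjoint, auto intro: finite_subset)
    moreover have "phi dd (vx k \<omega> x) = (\<Sum>l\<in>\<omega>. dd l * x l) + (\<Sum>l\<in>{..<k} - \<omega>. dd l * x (k + l))"
    proof -
      have "phi dd (vx k \<omega> x) = (\<Sum>l\<in>\<omega>. dd l * vx k \<omega> x l) + (\<Sum>l\<in>{..<k} - \<omega>. dd l * vx k \<omega> x l)"
        unfolding phi_def using \<omega> by (subst sk) (rule sum.union_disjoint, auto intro: finite_subset)
      also have "\<dots> = (\<Sum>l\<in>\<omega>. dd l * x l) + (\<Sum>l\<in>{..<k} - \<omega>. dd l * x (k + l))"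
        using \<omega> by (intro arg_cong2[where f="(+)"] sum.cong refl) (auto simp: vx_def)
      finally show ?thesis .
    qed
    ultimately show ?thesis by (simp add: sum_subtractf)
  qed
  finally show "g a ((tauG x k + (\<Sum>l\<in>\<omega>. tauG x l)) mod int N) = g a (phi dd (vx k \<omega> x) mod int N)"
    by simp
qed

lemma Uval_GA: "Uval = GA (g a)"
proof -
  have "Uval = avgV N (4*k) (\<lambda>x. HG (tauG x))" unfolding Uval_def HG_tauG ..
  also have "\<dots> = avgV N (4*k) HG" by (rule avgV_bij[OF tauG_in tauG_inj])
  also have "\<dots> = GA (g a)"
  proof -
    define \<Phi> where "\<Phi> c t = (\<Prod>S\<in>Pow {0..<k}. g a ((c + (\<Sum>i\<in>S. t i)) mod int N))" for c t
    have HGe: "HG x = \<Phi> (x k) (restrict x {0..<k})" for x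
      unfolding HG_def \<Phi>_def lessThan_atLeast0
    proof (intro prod.cong refl)
      fix S assume "S \<in> Pow {0..<k}"
      then have "(\<Sum>i\<in>S. restrict x {0..<k} i) = (\<Sum>l\<in>S. x l)" by (intro sum.cong refl) auto
      then show "g a ((x k + (\<Sum>l\<in>S. x l)) mod int N) = g a ((x k + (\<Sum>i\<in>S. restrict x {0..<k} i)) mod int N)"
        by simp
    qed
    have dec: "{0..<4*k} = insert k ({0..<k} \<union> {k+1..<4*k})" using k2 by auto
    have kn: "k \<notin> {0..<k} \<union> {k+1..<4*k}" by auto
    have "(\<Sum>x\<in>ZN_vecs N (4*k). HG x)
        = (\<Sum>c\<in>ZN N. \<Sum>y\<in>PiE ({0..<k} \<union> {k+1..<4*k}) (\<lambda>_. ZN N). \<Phi> c (restrict (y(k := c)) {0..<k}))"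
      unfolding ZN_vecs_def dec HGe using sum_PiE_insert[OF kn, where Z="ZN N" and F="\<lambda>x. \<Phi> (x k) (restrict x {0..<k})"] by simp
    also have "\<dots> = (\<Sum>c\<in>ZN N. \<Sum>y\<in>PiE ({0..<k} \<union> {k+1..<4*k}) (\<lambda>_. ZN N). \<Phi> c (restrict y {0..<k}))"
    proof -
      have "restrict (y(k := c)) {0..<k} = restrict y {0..<k}" for y :: "nat \<Rightarrow> int" and c :: int
        by (auto simp: restrict_def)
      then show ?thesis by simp
    qed
    also have "\<dots> = (\<Sum>c\<in>ZN N. real N ^ (3*k - 1) * (\<Sum>t\<in>ZN_vecs N k. \<Phi> c t))"
    proof -
      have "card {k+1..<4*k} = 3*k - 1" by simp
      then show ?thesis unfolding ZN_vecs_def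
        by (subst sum_restrict) (auto simp: card_ZN ZN_finite)
    qed
    finally have "(\<Sum>x\<in>ZN_vecs N (4*k). HG x) = real N ^ (3*k - 1) * (\<Sum>c\<in>ZN N. \<Sum>t\<in>ZN_vecs N k. \<Phi> c t)"
      by (simp add: sum_distrib_left)
    moreover have "real (N ^ (4*k)) = real N ^ (3*k - 1) * (real N * real N ^ k)"
    proof -
      have "4*k = (3*k - 1) + (1 + k)" using k2 by arith
      then show ?thesis by (metis of_nat_power power_add power_one_right)
    qed
    ultimately show ?thesis unfolding avgV_def GA_def \<Phi>_def
      using N0 by (simp add: card_cartesian_product card_ZN card_ZN_vecs)
  qed
  finally show ?thesis .
qed

end


lemma pow_superadd: "0 \<le> x \<Longrightarrow> 0 \<le> y \<Longrightarrow> n \<ge> 1 \<Longrightarrow> x^n + y^n \<le> (x + y :: real)^n"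
proof (induction n)
  case 0 then show ?case by simp
next
  case (Suc n)
  show ?case
  proof (cases "n = 0")
    case True then show ?thesis by simp
  next
    case False
    then have IH: "x^n + y^n \<le> (x + y)^n" using Suc by auto
    have "x^(Suc n) + y^(Suc n) = x * x^n + y * y^n" by simp
    also have "\<dots> \<le> (x + y) * x^n + (x + y) * y^n"
      using Suc.prems by (intro add_mono mult_right_mono) auto
    also have "\<dots> = (x + y) * (x^n + y^n)" by (simp add: algebra_simps)
    also have "\<dots> \<le> (x + y) * (x + y)^n" using IH Suc.prems by (intro mult_left_mono) auto
    finally show ?thesis by simp
  qed
qed

lemma root_subadd:
  assumes "n > 0" "0 \<le> a" "0 \<le> b"
  shows "root n (a + b) \<le> root n a + root n b"
proof -
  have "a + b = (root n a)^n + (root n b)^n" using assms by (simp add: real_root_pow_pos2)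
  also have "\<dots> \<le> (root n a + root n b)^n" using assms by (intro pow_superadd) auto
  finally have "a + b \<le> (root n a + root n b)^n" .
  then have "root n (a + b) \<le> root n ((root n a + root n b)^n)" using assms by (simp add: real_root_le_iff)
  also have "\<dots> = root n a + root n b" using assms by (intro real_root_power_cancel) auto
  finally show ?thesis .
qed

context setting begin

lemma Uval_nonneg: "Uval \<ge> 0"
proof -
  interpret triv: cube N k "4*k" G0 "\<lambda>_ _. 1" "\<lambda>_ _. 1"
    by unfold_locales (auto simp: N0)
  have A1: "triv.Anorm D i \<le> 1" for D i
    unfolding triv.Anorm_def avgV_def using N0 by (simp add: card_ZN_vecs)
  have "triv.Tst {..<k} \<ge> 0" using triv.iterate[OF A1, of k] k2 by auto
  moreover have "triv.Tst {..<k} = Uval"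
    unfolding triv.Tst_def triv.trm_def Uval_def FF_def by simp
  ultimately show ?thesis by simp
qed

lemma Uval_le: "LFd \<delta> \<Longrightarrow> Uval \<le> 1 + \<delta>"
proof -
  assume LF: "LFd \<delta>"
  have "Uval \<le> avgV N (4*k) PP" unfolding Uval_def
    by (rule avgV_mono) (use FF_PP in \<open>auto simp: abs_le_iff\<close>)
  also have "\<dots> \<le> 1 + \<delta>" using LF_bounds(1)[OF LF] by linarith
  finally show ?thesis .
qed

lemma main_N:
  assumes LF: "LFd \<delta>" and d0: "0 \<le> \<delta>" and d1: "\<delta> \<le> 1"
  shows "\<bar>Lam\<bar> \<le> root (2^k) (GA (g a)) + 2 * \<delta> + 2 * root (2^k) (sqrt ((1 + \<delta>) * (4 * \<delta>)))"
proof -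
  define n :: nat where "n = 2^k"
  have n0: "n > 0" unfolding n_def by simp
  define \<eta> where "\<eta> = sqrt ((1 + \<delta>) * (4 * \<delta>))"
  have eta0: "\<eta> \<ge> 0" unfolding \<eta>_def using d0 by simp
  have it: "\<bar>Tst {}\<bar>^n \<le> (1 + \<delta>)^(n - 1) * \<bar>Tst {..<k}\<bar>" "Tst {..<k} \<ge> 0"
    using iterate[of "1 + \<delta>" k] Anorm_bound[OF LF] k2 unfolding n_def by auto
  have fb: "(Tst {..<k} - Uval)^2 \<le> (1 + \<delta>) * (4 * \<delta>)"
    using final_bound[OF d0 LF_bounds[OF LF]] .
  have "\<bar>Tst {..<k} - Uval\<bar> \<le> \<eta>" unfolding \<eta>_def using fb by (simp add: real_le_rsqrt)
  then have T: "\<bar>Tst {..<k}\<bar> \<le> Uval + \<eta>" using it(2) by linarith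
  have U0: "Uval \<ge> 0" by (rule Uval_nonneg)
  have U1: "Uval \<le> 2" using Uval_le[OF LF] d1 by linarith
  have "\<bar>Tst {}\<bar>^n \<le> (1 + \<delta>)^n * (Uval + \<eta>)"
  proof -
    have p0: "(1 + \<delta>)^(n - 1) \<ge> 0" using d0 by simp
    have "(1 + \<delta>)^(n - 1) * \<bar>Tst {..<k}\<bar> \<le> (1 + \<delta>)^(n - 1) * (Uval + \<eta>)"
      using T p0 by (rule mult_left_mono)
    then have "\<bar>Tst {}\<bar>^n \<le> (1 + \<delta>)^(n - 1) * (Uval + \<eta>)" using it(1) by linarith
    also have "\<dots> \<le> (1 + \<delta>)^n * (Uval + \<eta>)"
      using d0 U0 eta0 n0 by (intro mult_right_mono power_increasing) auto
    finally show ?thesis .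
  qed
  then have "root n (\<bar>Tst {}\<bar>^n) \<le> root n ((1 + \<delta>)^n * (Uval + \<eta>))"
    using n0 by (simp add: real_root_le_iff)
  then have "\<bar>Tst {}\<bar> \<le> (1 + \<delta>) * root n (Uval + \<eta>)"
    using n0 d0 by (simp add: real_root_mult real_root_pow_pos2 real_root_power_cancel)
  also have "\<dots> \<le> (1 + \<delta>) * (root n Uval + root n \<eta>)"
    using root_subadd[OF n0 U0 eta0] d0 by (intro mult_left_mono) auto
  also have "\<dots> \<le> root n Uval + 2 * \<delta> + 2 * root n \<eta>"
  proof -
    have u2: "root n Uval \<le> 2"
    proof -
      have "root n Uval \<le> root n 2" using U1 n0 by (simp add: real_root_le_iff)
      also have "root n 2 \<le> 2"
      proof -
        have "(2::real) \<le> 2 ^ n" using self_le_power[of "2::real" n] n0 by simp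
        then have "root n 2 \<le> root n (2 ^ n)" using n0 by (simp add: real_root_le_iff)
        also have "root n (2 ^ n) = (2::real)" using n0 by (intro real_root_power_cancel) auto
        finally show ?thesis .
      qed
      finally show ?thesis .
    qed
    have r0: "root n \<eta> \<ge> 0" using eta0 n0 by simp
    have "(1 + \<delta>) * (root n Uval + root n \<eta>) = root n Uval + \<delta> * root n Uval + (1 + \<delta>) * root n \<eta>"
      by (simp add: algebra_simps)
    also have "\<dots> \<le> root n Uval + \<delta> * 2 + 2 * root n \<eta>"
      using u2 d0 d1 r0 by (intro add_mono mult_left_mono mult_right_mono) auto
    finally show ?thesis by simp
  qed
  finally show ?thesis unfolding Lam_Tst[symmetric] Uval_GA n_def \<eta>_def .
qed

end


definition errf :: "nat \<Rightarrow> real \<Rightarrow> real" where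
  "errf k \<delta> = 2^(k+1) * (2 * \<delta> + 2 * root (2^k) (sqrt ((1 + \<delta>) * (4 * \<delta>))))"

definition LamF :: "nat \<Rightarrow> nat \<Rightarrow> (nat \<Rightarrow> int \<Rightarrow> real) \<Rightarrow> real" where
  "LamF N k f = (\<Sum>x\<in>ZN N. \<Sum>s\<in>ZN N. \<Prod>j\<le>k. f j ((x + int j * s) mod int N)) / real (card (ZN N \<times> ZN N))"

lemma LHS_small:
  assumes k2: "k \<ge> 2" and prw: "pseudo_random_weight (m0k k) (4*k) (Lk k) q0 \<nu>"
    and d0: "0 < \<delta>" and d1: "\<delta> \<le> 1"
  shows "\<exists>N0. \<forall>N f. prime N \<and> N \<ge> N0 \<longrightarrow> (\<forall>j\<le>k. \<forall>x\<in>ZN N. \<bar>f j x\<bar> \<le> 1 + \<nu> N x) \<longrightarrow>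
     \<bar>LamF N k f\<bar> \<le> 2^(k+1) * (MIN j\<in>{0..k}. gowers_norm N k (f j)) + errf k \<delta>"
proof -
  have lf: "linear_forms_condition (m0k k) (4*k) (Lk k) \<nu>" and nu0: "\<And>N x. prime N \<Longrightarrow> x \<in> ZN N \<Longrightarrow> \<nu> N x \<ge> 0"
    using prw unfolding pseudo_random_weight_def by auto
  obtain N0 where N0: "\<forall>N. prime N \<and> N \<ge> N0 \<longrightarrow> (\<forall>(J::(nat \<times> nat \<times> nat set) set) \<psi>. admissible (m0k k) (4*k) (Lk k) J \<psi> \<longrightarrow>
     \<bar>avgV N (4*k) (\<lambda>x. \<Prod>\<iota>\<in>J. (1 + \<nu> N ((\<Sum>l<4*k. \<psi> \<iota> l * x l) mod int N)) / 2) - 1\<bar> \<le> \<delta>)"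
    using LF_transfer[OF lf d0] by blast
  show ?thesis
  proof (intro exI[of _ "max N0 (2*k*k+1)"] allI impI)
    fix N f assume N: "prime N \<and> max N0 (2*k*k+1) \<le> N" and fb: "\<forall>j\<le>k. \<forall>x\<in>ZN N. \<bar>f j x\<bar> \<le> 1 + \<nu> N x"
    have fin: "finite ((\<lambda>j. gowers_norm N k (f j)) ` {0..k})" by simp
    have ne: "(\<lambda>j. gowers_norm N k (f j)) ` {0..k} \<noteq> {}" by simp
    have "(MIN j\<in>{0..k}. gowers_norm N k (f j)) \<in> (\<lambda>j. gowers_norm N k (f j)) ` {0..k}"
      using Min_in[OF fin ne] .
    then obtain a where a: "a \<in> {0..k}" and aM: "(MIN j\<in>{0..k}. gowers_norm N k (f j)) = gowers_norm N k (f a)"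
      by blast
    interpret S: setting N k a "\<lambda>x. (1 + \<nu> N x) / 2" "\<lambda>j x. f j x / 2"
    proof
      show "prime N" using N by simp
      show "2 \<le> k" by (rule k2)
      show "a \<le> k" using a by simp
      show "2 * k * k < N" using N by simp
      show "0 \<le> (1 + \<nu> N x) / 2" if "x \<in> ZN N" for x using nu0[of N x] N that by simp
      show "\<bar>f j x / 2\<bar> \<le> (1 + \<nu> N x) / 2" if "j \<le> k" "x \<in> ZN N" for j x using fb that by simp
    qed
    have LF: "S.LFd \<delta>"
      unfolding S.LFd_def
    proof (intro allI impI)
      fix J assume "J \<subseteq> S.JU" "card J \<le> m0k k"
      then have "admissible (m0k k) (4*k) (Lk k) J S.psi" by (rule S.admissible_JU)
      then show "\<bar>avgV N (4*k) (\<lambda>x. \<Prod>\<iota>\<in>J. (1 + \<nu> N ((\<Sum>l<4*k. S.psi \<iota> l * x l) mod int N)) / 2) - 1\<bar> \<le> \<delta>"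
        using N0 N by auto
    qed
    note mn = S.main_N[OF LF less_imp_le[OF d0] d1]
    have lam: "S.Lam = LamF N k f / 2^(k+1)"
    proof -
      have "(\<Prod>j\<le>k. h j / 2) = (\<Prod>j\<le>k. h j) / 2^(k+1)" for h :: "nat \<Rightarrow> real"
        by (simp add: prod_dividef)
      then show ?thesis unfolding S.Lam_def LamF_def by (simp add: sum_divide_distrib mult.commute)
    qed
    have ga: "S.GA (\<lambda>x. f a x / 2) = S.GA (f a) / 2^(2^k)"
    proof -
      have "(\<Prod>T\<in>Pow {0..<k}. h T / 2) = (\<Prod>T\<in>Pow {0..<k}. h T) / 2^(2^k)" for h :: "nat set \<Rightarrow> real"
        by (simp add: prod_dividef card_Pow)
      then show ?thesis unfolding S.GA_def by (simp add: sum_divide_distrib mult.commute)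
    qed
    have rt: "root (2^k) (S.GA (\<lambda>x. f a x / 2)) = gowers_norm N k (f a) / 2"
    proof -
      have "root (2^k) ((2::real)^(2^k)) = 2" by (intro real_root_power_cancel) auto
      then show ?thesis unfolding ga S.gowers_GA by (simp add: real_root_divide)
    qed
    have gn0: "gowers_norm N k (f a) \<ge> 0"
    proof -
      have "S.Uval \<ge> 0" by (rule S.Uval_nonneg)
      then have "root (2^k) (S.GA (\<lambda>x. f a x / 2)) \<ge> 0" unfolding S.Uval_GA by simp
      then show ?thesis unfolding rt by simp
    qed
    have "\<bar>LamF N k f\<bar> / 2^(k+1) \<le> gowers_norm N k (f a) / 2 + 2 * \<delta> + 2 * root (2^k) (sqrt ((1 + \<delta>) * (4 * \<delta>)))"
      using mn unfolding lam rt by simp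
    then have "\<bar>LamF N k f\<bar> \<le> 2^(k+1) * (gowers_norm N k (f a) / 2) + errf k \<delta>"
      unfolding errf_def by (simp add: field_simps)
    also have "\<dots> \<le> 2^(k+1) * gowers_norm N k (f a) + errf k \<delta>" using gn0 by simp
    finally show "\<bar>LamF N k f\<bar> \<le> 2^(k+1) * (MIN j\<in>{0..k}. gowers_norm N k (f j)) + errf k \<delta>"
      unfolding aM .
  qed
qed


lemma errf_tendsto: "((\<lambda>\<delta>. errf k \<delta>) \<longlongrightarrow> 0) (at_right 0)"
proof -
  have "((\<lambda>\<delta>. errf k \<delta>) \<longlongrightarrow> errf k 0) (at_right 0)"
    unfolding errf_def by (intro tendsto_intros)
  then show ?thesis by (simp add: errf_def)
qed

lemma errf_small: "e > 0 \<Longrightarrow> \<exists>\<delta>. 0 < \<delta> \<and> \<delta> \<le> 1 \<and> errf k \<delta> < e"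
proof -
  assume e: "e > 0"
  have "eventually (\<lambda>\<delta>. errf k \<delta> < e) (at_right 0)"
    using order_tendstoD(2)[OF errf_tendsto e] .
  then obtain b where b: "b > 0" "\<forall>y>0. y < b \<longrightarrow> errf k y < e"
    unfolding eventually_at_right_field by auto
  show ?thesis using b by (intro exI[of _ "min (b/2) 1"]) auto
qed

lemma errf_nonneg: "0 \<le> \<delta> \<Longrightarrow> 0 \<le> errf k \<delta>"
  unfolding errf_def by simp

lemma root_abs_bound: "n > 0 \<Longrightarrow> \<bar>root n x\<bar> \<le> 1 + \<bar>x\<bar>"
proof -
  assume n: "n > 0"
  have "\<bar>x\<bar> \<le> (1 + \<bar>x\<bar>)^n"
  proof -
    have "1 + \<bar>x\<bar> \<le> (1 + \<bar>x\<bar>)^n" using n by (intro self_le_power) auto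
    then show ?thesis by simp
  qed
  then have "root n \<bar>x\<bar> \<le> root n ((1 + \<bar>x\<bar>)^n)" using n by (simp add: real_root_le_iff)
  also have "\<dots> = 1 + \<bar>x\<bar>" using n by (intro real_root_power_cancel) auto
  finally show ?thesis using real_root_abs[OF n] by simp
qed

lemma prod_abs_le: "(\<And>j. j \<in> A \<Longrightarrow> \<bar>u j\<bar> \<le> w j) \<Longrightarrow> \<bar>\<Prod>j\<in>A. u j\<bar> \<le> (\<Prod>j\<in>A. (w j :: real))"
  unfolding abs_prod by (intro prod_mono) auto

theorem proposition3p3:
  fixes k :: nat
  assumes "k \<ge> 2"
  shows "\<exists>m0 t L q0. m0 > 0 \<and> t > 0 \<and> L > 0 \<and> q0 > 0 \<and>
    (\<forall>nu. pseudo_random_weight m0 t L q0 nu \<longrightarrow>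
      (\<exists>eps :: nat \<Rightarrow> real.
         (\<forall>N. eps N \<ge> 0) \<and>
         (\<forall>e>0. \<exists>N0. \<forall>N. prime N \<and> N \<ge> N0 \<longrightarrow> eps N < e) \<and>
         (\<forall>N (f :: nat \<Rightarrow> int \<Rightarrow> real). prime N \<longrightarrow>
            (\<forall>j\<le>k. \<forall>x\<in>ZN N. \<bar>f j x\<bar> \<le> 1 + nu N x) \<longrightarrow>
            \<bar>(\<Sum>x\<in>ZN N. \<Sum>s\<in>ZN N. \<Prod>j\<le>k. f j ((x + int j * s) mod int N))
               / real (card (ZN N \<times> ZN N))\<bar>
            \<le> 2 ^ (k + 1) * (MIN j\<in>{0..k}. gowers_norm N k (f j)) + eps N)))"
proof (rule exI[of _ "m0k k"], rule exI[of _ "4*k"], rule exI[of _ "Lk k"], rule exI[of _ "1::nat"], intro conjI allI impI)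
  have k2: "k \<ge> 2" by fact
  show "0 < m0k k" unfolding m0k_def by simp
  show "0 < 4 * k" using k2 by simp
  show "0 < Lk k" unfolding Lk_def using k2 by simp
  show "0 < (1::nat)" by simp
  fix \<nu> :: "nat \<Rightarrow> int \<Rightarrow> real"
  assume prw: "pseudo_random_weight (m0k k) (4*k) (Lk k) 1 \<nu>"
  have nu0: "\<And>N x. prime N \<Longrightarrow> x \<in> ZN N \<Longrightarrow> \<nu> N x \<ge> 0"
    using prw unfolding pseudo_random_weight_def by auto
  define adm where "adm N f \<longleftrightarrow> (\<forall>j\<le>k. \<forall>x\<in>ZN N. \<bar>f j x\<bar> \<le> 1 + \<nu> N x)" for N and f :: "nat \<Rightarrow> int \<Rightarrow> real"
  define D where "D N f = \<bar>LamF N k f\<bar> - 2^(k+1) * (MIN j\<in>{0..k}. gowers_norm N k (f j))" for N f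
  define Sset where "Sset N = (\<lambda>f. max 0 (D N f)) ` {f. adm N f}" for N
  define eps where "eps N = (if prime N then Sup (Sset N) else 0)" for N
  define C1 where "C1 N = (\<Sum>x\<in>ZN N. \<Sum>s\<in>ZN N. \<Prod>j\<le>k. (1 + \<nu> N ((x + int j * s) mod int N))) / real (card (ZN N \<times> ZN N))" for N
  define C2 where "C2 N = (\<Sum>x\<in>ZN N. \<Sum>t\<in>ZN_vecs N k. \<Prod>S\<in>Pow {0..<k}. (1 + \<nu> N ((x + (\<Sum>i\<in>S. t i)) mod int N)))
       / real (card (ZN N \<times> ZN_vecs N k))" for N
  have ne: "Sset N \<noteq> {}" if "prime N" for N
  proof -
    have "adm N (\<lambda>_ _. 0)" unfolding adm_def using nu0[OF that] by auto
    then show ?thesis unfolding Sset_def by auto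
  qed
  have bdd: "bdd_above (Sset N)" if N: "prime N" for N
  proof (rule bdd_aboveI)
    fix z assume "z \<in> Sset N"
    then obtain f where f: "adm N f" and z: "z = max 0 (D N f)" unfolding Sset_def by auto
    have N0: "N > 0" using N prime_gt_0_nat by blast
    have memZ: "y mod int N \<in> ZN N" for y using N0 by (rule mod_in_ZN)
    have L1: "\<bar>LamF N k f\<bar> \<le> C1 N"
    proof -
      have "\<bar>LamF N k f\<bar> = \<bar>\<Sum>x\<in>ZN N. \<Sum>s\<in>ZN N. \<Prod>j\<le>k. f j ((x + int j * s) mod int N)\<bar> / real (card (ZN N \<times> ZN N))"
        unfolding LamF_def by simp
      also have "\<dots> \<le> C1 N" unfolding C1_def
      proof (intro divide_right_mono order_trans[OF sum_abs] sum_mono order_trans[OF sum_abs])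
        fix x s show "\<bar>\<Prod>j\<le>k. f j ((x + int j * s) mod int N)\<bar> \<le> (\<Prod>j\<le>k. 1 + \<nu> N ((x + int j * s) mod int N))"
          using f memZ unfolding adm_def by (intro prod_abs_le) auto
      qed auto
      finally show ?thesis .
    qed
    have L2: "\<bar>gowers_norm N k (f j)\<bar> \<le> 1 + C2 N" if j: "j \<le> k" for j
    proof -
      have "\<bar>gowers_norm N k (f j)\<bar> \<le> 1 + \<bar>(\<Sum>x\<in>ZN N. \<Sum>t\<in>ZN_vecs N k. \<Prod>S\<in>Pow {0..<k}. f j ((x + (\<Sum>i\<in>S. t i)) mod int N))
       / real (card (ZN N \<times> ZN_vecs N k))\<bar>"
        unfolding gowers_norm_def by (rule root_abs_bound) simp
      also have "\<dots> = 1 + \<bar>\<Sum>x\<in>ZN N. \<Sum>t\<in>ZN_vecs N k. \<Prod>S\<in>Pow {0..<k}. f j ((x + (\<Sum>i\<in>S. t i)) mod int N)\<bar>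
       / real (card (ZN N \<times> ZN_vecs N k))" by (simp add: abs_divide)
      also have "\<dots> \<le> 1 + C2 N" unfolding C2_def
      proof (intro add_left_mono divide_right_mono order_trans[OF sum_abs] sum_mono order_trans[OF sum_abs])
        fix x t show "\<bar>\<Prod>S\<in>Pow {0..<k}. f j ((x + (\<Sum>i\<in>S. t i)) mod int N)\<bar>
            \<le> (\<Prod>S\<in>Pow {0..<k}. 1 + \<nu> N ((x + (\<Sum>i\<in>S. t i)) mod int N))"
          using f memZ j unfolding adm_def by (intro prod_abs_le) auto
      qed auto
      finally show ?thesis .
    qed
    have fin: "finite ((\<lambda>j. gowers_norm N k (f j)) ` {0..k})" by simp
    have nemp: "(\<lambda>j. gowers_norm N k (f j)) ` {0..k} \<noteq> {}" by simp
    have "(MIN j\<in>{0..k}. gowers_norm N k (f j)) \<in> (\<lambda>j. gowers_norm N k (f j)) ` {0..k}"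
      using Min_in[OF fin nemp] .
    then obtain a where a: "a \<in> {0..k}" and aM: "(MIN j\<in>{0..k}. gowers_norm N k (f j)) = gowers_norm N k (f a)"
      by blast
    have "D N f \<le> C1 N + 2^(k+1) * (1 + C2 N)"
    proof -
      have "- gowers_norm N k (f a) \<le> 1 + C2 N" using L2[of a] a by auto
      then have "(2::real)^(k+1) * (- gowers_norm N k (f a)) \<le> 2^(k+1) * (1 + C2 N)"
        by (rule mult_left_mono) simp
      then show ?thesis unfolding D_def aM using L1 by (simp add: algebra_simps)
    qed
    moreover have "(2::real)^(k+1) * (1 + C2 N) \<le> 2^(k+1) * (1 + \<bar>C2 N\<bar>)" by (intro mult_left_mono) auto
    moreover have "(0::real) \<le> 2^(k+1) * (1 + \<bar>C2 N\<bar>)" by simp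
    moreover have "C1 N \<le> \<bar>C1 N\<bar>" by simp
    ultimately show "z \<le> \<bar>C1 N\<bar> + 2^(k+1) * (1 + \<bar>C2 N\<bar>)" unfolding z by linarith
  qed
  have A: "\<forall>N. eps N \<ge> 0"
  proof
    fix N show "eps N \<ge> 0"
    proof (cases "prime N")
      case True
      obtain z where zS: "z \<in> Sset N" using ne[OF True] by auto
      have "z \<ge> 0" using zS unfolding Sset_def by auto
      moreover have "z \<le> Sup (Sset N)" by (rule cSup_upper[OF zS bdd[OF True]])
      ultimately show ?thesis unfolding eps_def using True by simp
    qed (simp add: eps_def)
  qed
  have B: "\<forall>e>0. \<exists>N0. \<forall>N. prime N \<and> N \<ge> N0 \<longrightarrow> eps N < e"
  proof (intro allI impI)
    fix e :: real assume e: "e > 0"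
    obtain \<delta> where d: "0 < \<delta>" "\<delta> \<le> 1" "errf k \<delta> < e" using errf_small[OF e] by blast
    obtain N0 where N0: "\<forall>N f. prime N \<and> N \<ge> N0 \<longrightarrow> (\<forall>j\<le>k. \<forall>x\<in>ZN N. \<bar>f j x\<bar> \<le> 1 + \<nu> N x) \<longrightarrow>
     \<bar>LamF N k f\<bar> \<le> 2^(k+1) * (MIN j\<in>{0..k}. gowers_norm N k (f j)) + errf k \<delta>"
      using LHS_small[OF k2 prw d(1) d(2)] by blast
    show "\<exists>N0. \<forall>N. prime N \<and> N \<ge> N0 \<longrightarrow> eps N < e"
    proof (intro exI[of _ N0] allI impI)
      fix N assume N: "prime N \<and> N \<ge> N0"
      have "Sup (Sset N) \<le> errf k \<delta>"
      proof (rule cSup_least[OF ne])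
        show "prime N" using N by simp
        fix z assume "z \<in> Sset N"
        then obtain f where f: "adm N f" and z: "z = max 0 (D N f)" unfolding Sset_def by auto
        have f': "\<forall>j\<le>k. \<forall>x\<in>ZN N. \<bar>f j x\<bar> \<le> 1 + \<nu> N x" using f unfolding adm_def .
        have "\<bar>LamF N k f\<bar> \<le> 2^(k+1) * (MIN j\<in>{0..k}. gowers_norm N k (f j)) + errf k \<delta>"
          using N0[rule_format, of N f] N f' by blast
        then have "D N f \<le> errf k \<delta>" unfolding D_def by simp
        then show "z \<le> errf k \<delta>" unfolding z using errf_nonneg[of \<delta> k] d(1) by simp
      qed
      then show "eps N < e" unfolding eps_def using N d(3) by simp
    qed
  qed
  have C: "\<forall>N (f :: nat \<Rightarrow> int \<Rightarrow> real). prime N \<longrightarrow>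
            (\<forall>j\<le>k. \<forall>x\<in>ZN N. \<bar>f j x\<bar> \<le> 1 + \<nu> N x) \<longrightarrow>
            \<bar>(\<Sum>x\<in>ZN N. \<Sum>s\<in>ZN N. \<Prod>j\<le>k. f j ((x + int j * s) mod int N))
               / real (card (ZN N \<times> ZN N))\<bar>
            \<le> 2 ^ (k + 1) * (MIN j\<in>{0..k}. gowers_norm N k (f j)) + eps N"
  proof (intro allI impI)
    fix N and f :: "nat \<Rightarrow> int \<Rightarrow> real"
    assume N: "prime N" and fb: "\<forall>j\<le>k. \<forall>x\<in>ZN N. \<bar>f j x\<bar> \<le> 1 + \<nu> N x"
    have mem: "max 0 (D N f) \<in> Sset N" unfolding Sset_def adm_def using fb by auto
    have "max 0 (D N f) \<le> Sup (Sset N)" by (rule cSup_upper[OF mem bdd[OF N]])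
    then have "D N f \<le> eps N" unfolding eps_def using N by simp
    then show "\<bar>(\<Sum>x\<in>ZN N. \<Sum>s\<in>ZN N. \<Prod>j\<le>k. f j ((x + int j * s) mod int N)) / real (card (ZN N \<times> ZN N))\<bar>
            \<le> 2 ^ (k + 1) * (MIN j\<in>{0..k}. gowers_norm N k (f j)) + eps N"
      unfolding D_def LamF_def by simp
  qed
  show "\<exists>eps :: nat \<Rightarrow> real.
         (\<forall>N. eps N \<ge> 0) \<and>
         (\<forall>e>0. \<exists>N0. \<forall>N. prime N \<and> N \<ge> N0 \<longrightarrow> eps N < e) \<and>
         (\<forall>N (f :: nat \<Rightarrow> int \<Rightarrow> real). prime N \<longrightarrow>
            (\<forall>j\<le>k. \<forall>x\<in>ZN N. \<bar>f j x\<bar> \<le> 1 + \<nu> N x) \<longrightarrow>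
            \<bar>(\<Sum>x\<in>ZN N. \<Sum>s\<in>ZN N. \<Prod>j\<le>k. f j ((x + int j * s) mod int N))
               / real (card (ZN N \<times> ZN N))\<bar>
            \<le> 2 ^ (k + 1) * (MIN j\<in>{0..k}. gowers_norm N k (f j)) + eps N)"
    by (rule exI[of _ eps], intro conjI A B C)
qed


end
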